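(* Let $A$ be a unital $C^*$-algebra. Suppose $e_1,\dots,e_n\in A$ are mutually orthogonal projections and $u\in U(A)$ is a unitary such that $u^*e_iu=e_{i+1}$ for $i=1,\dots,n$, where $e_{n+1}=e_1$. Let $p=\sum_{i=1}^n e_i$. Then the $C^*$-subalgebra of $A$ generated by $\{e_i:1\le i\le n\}$, $\{e_iue_{i+1}:1\le i\le n-1\}$ and $pup$ is isomorphic to $C(X)\otimes M_n$ for some compact subset $X\subset S^1$. *)

theory Defs
  imports "HOL-Analysis.Analysis"
begin

locale unital_cstar_algebra =
  fixes sc :: "complex \<Rightarrow> 'a::{banach, real_normed_algebra_1} \<Rightarrow> 'a"
    and st :: "'a \<Rightarrow> 'a"
  assumes sc_add_right: "sc c (x + y) = sc c x + sc c y"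
    and sc_add_left: "sc (c + d) x = sc c x + sc d x"
    and sc_sc: "sc c (sc d x) = sc (c * d) x"
    and sc_of_real: "sc (complex_of_real r) x = scaleR r x"
    and norm_sc: "norm (sc c x) = cmod c * norm x"
    and sc_mult_left: "sc c x * y = sc c (x * y)"
    and sc_mult_right: "x * sc c y = sc c (x * y)"
    and st_st: "st (st x) = x"
    and st_add: "st (x + y) = st x + st y"
    and st_sc: "st (sc c x) = sc (cnj c) (st x)"
    and st_mult: "st (x * y) = st y * st x"
    and cstar_id: "norm (st x * x) = (norm x)\<^sup>2"

definition projection :: "('a::ring_1 \<Rightarrow> 'a) \<Rightarrow> 'a \<Rightarrow> bool" where
  "projection st e \<longleftrightarrow> st e = e \<and> e * e = e"

definition unitary :: "('a::ring_1 \<Rightarrow> 'a) \<Rightarrow> 'a \<Rightarrow> bool" where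
  "unitary st u \<longleftrightarrow> st u * u = 1 \<and> u * st u = 1"

text \<open>*-subalgebras (not required to contain the unit) and the C*-subalgebra
  generated by a set S: the smallest norm-closed *-subalgebra containing S.\<close>
definition star_subalgebra ::
  "(complex \<Rightarrow> 'a::ring_1 \<Rightarrow> 'a) \<Rightarrow> ('a \<Rightarrow> 'a) \<Rightarrow> 'a set \<Rightarrow> bool" where
  "star_subalgebra sc st B \<longleftrightarrow> 0 \<in> B \<and>
     (\<forall>x\<in>B. \<forall>y\<in>B. x + y \<in> B \<and> x * y \<in> B) \<and>
     (\<forall>c. \<forall>x\<in>B. sc c x \<in> B) \<and> (\<forall>x\<in>B. st x \<in> B)"

definition cstar_generated ::
  "(complex \<Rightarrow> 'a::{real_normed_algebra_1} \<Rightarrow> 'a) \<Rightarrow> ('a \<Rightarrow> 'a) \<Rightarrow> 'a set \<Rightarrow> 'a set" where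
  "cstar_generated sc st S = \<Inter>{B. S \<subseteq> B \<and> closed B \<and> star_subalgebra sc st B}"

text \<open>The C*-algebra C(X) \<otimes> M_n = M_n(C(X)): continuous functions from X to
  n\<times>n complex matrices, matrices given by entries indexed by 0..n-1; entries
  outside X or outside the index range are normalised to 0.\<close>
definition CX_Mn :: "complex set \<Rightarrow> nat \<Rightarrow> (complex \<Rightarrow> nat \<Rightarrow> nat \<Rightarrow> complex) set" where
  "CX_Mn X n = {F. (\<forall>i<n. \<forall>j<n. continuous_on X (\<lambda>x. F x i j)) \<and>
                   (\<forall>x i j. (x \<notin> X \<or> \<not> (i < n \<and> j < n)) \<longrightarrow> F x i j = 0)}"

definition CX_Mn_add where "CX_Mn_add F G = (\<lambda>x i j. F x i j + G x i j)"
definition CX_Mn_mult where "CX_Mn_mult n F G = (\<lambda>x i j. \<Sum>k<n. F x i k * G x k j)"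
definition CX_Mn_scale where "CX_Mn_scale c F = (\<lambda>x i j. c * F x i j)"
definition CX_Mn_star where "CX_Mn_star F = (\<lambda>x i j. cnj (F x j i))"

definition star_iso_CX_Mn ::
  "(complex \<Rightarrow> 'a::ring_1 \<Rightarrow> 'a) \<Rightarrow> ('a \<Rightarrow> 'a) \<Rightarrow> 'a set \<Rightarrow> complex set \<Rightarrow> nat
     \<Rightarrow> ('a \<Rightarrow> complex \<Rightarrow> nat \<Rightarrow> nat \<Rightarrow> complex) \<Rightarrow> bool" where
  "star_iso_CX_Mn sc st B X n \<phi> \<longleftrightarrow> bij_betw \<phi> B (CX_Mn X n) \<and>
     (\<forall>a\<in>B. \<forall>b\<in>B. \<phi> (a + b) = CX_Mn_add (\<phi> a) (\<phi> b) \<and>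
                    \<phi> (a * b) = CX_Mn_mult n (\<phi> a) (\<phi> b)) \<and>
     (\<forall>c. \<forall>a\<in>B. \<phi> (sc c a) = CX_Mn_scale c (\<phi> a)) \<and>
     (\<forall>a\<in>B. \<phi> (st a) = CX_Mn_star (\<phi> a))"

end

theory Submission
  imports Defs "HOL-Computational_Algebra.Fundamental_Theorem_Algebra"
begin

definition cinv :: "'a::ring_1 \<Rightarrow> 'a \<Rightarrow> bool" where
  "cinv e y \<longleftrightarrow> (\<exists>w. e * w = w \<and> w * e = w \<and> y * w = e \<and> w * y = e)"

lemma cinv_mult:
  fixes e :: "'a::ring_1"
  assumes "cinv e a" "cinv e b" "a * e = a" "e * b = b"
  shows "cinv e (a * b)"
proof -
  obtain q where q: "e * q = q" "q * e = q" "a * q = e" "q * a = e" using assms(1) unfolding cinv_def by blast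
  obtain w where w: "e * w = w" "w * e = w" "b * w = e" "w * b = e" using assms(2) unfolding cinv_def by blast
  have "a * b * (w * q) = a * (b * w) * q" by (simp add: mult.assoc)
  also have "\<dots> = e" using q w assms by (simp add: mult.assoc)
  finally have 1: "a * b * (w * q) = e" .
  have "w * q * (a * b) = w * (q * a) * b" by (simp add: mult.assoc)
  also have "\<dots> = e" using q w by (simp add: mult.assoc)
  finally have 2: "w * q * (a * b) = e" .
  have 3: "e * (w * q) = w * q" "w * q * e = w * q" using q w by (simp_all add: mult.assoc[symmetric]) (simp add: mult.assoc)
  show ?thesis unfolding cinv_def using 1 2 3 by blast
qed

lemma cinv_commute_factor:
  fixes e :: "'a::ring_1"
  assumes "cinv e (a * b)" "a * b = b * a" "e * a = a" "a * e = a" "e * b = b" "b * e = b"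
  shows "cinv e a"
proof -
  obtain w where w: "e * w = w" "w * e = w" "a * b * w = e" "w * (a * b) = e" using assms(1) unfolding cinv_def by blast
  have r: "a * (b * w) = e" using w by (simp add: mult.assoc)
  have l: "(w * b) * a = e" using w assms(2) by (simp add: mult.assoc)
  have "w * b = w * b * e" using assms by (simp add: mult.assoc)
  also have "\<dots> = w * b * (a * (b * w))" using r by simp
  also have "\<dots> = (w * b * a) * (b * w)" by (simp add: mult.assoc)
  also have "\<dots> = e * (b * w)" using l by (simp add: mult.assoc[symmetric])
  also have "\<dots> = b * w" using assms by (simp add: mult.assoc[symmetric])
  finally have eq: "w * b = b * w" .
  have 3: "e * (b * w) = b * w" "b * w * e = b * w" using w assms by (simp_all add: mult.assoc[symmetric]) (simp add: mult.assoc)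
  have 4: "b * w * a = e" using l eq by simp
  show ?thesis unfolding cinv_def using r 3 4 by blast
qed

lemma cinv_unique:
  fixes e :: "'a::ring_1"
  assumes "e * q = q" "q * e = q" "y * q = e" "q * y = e" "e * w = w" "w * e = w" "y * w = e" "w * y = e"
  shows "q = w"
proof -
  have "q = q * (y * w)" using assms by simp
  also have "\<dots> = (q * y) * w" by (simp add: mult.assoc)
  finally show ?thesis using assms by simp
qed

context unital_cstar_algebra begin

lemma sc_zero_left[simp]: "sc 0 x = 0" using sc_of_real[of 0 x] by simp
lemma sc_one[simp]: "sc 1 x = x" using sc_of_real[of 1 x] by simp
lemma sc_zero_right[simp]: "sc c 0 = 0" using sc_add_right[of c 0 0] by simp
lemma sc_minus_right: "sc c (- x) = - sc c x"
  using sc_add_right[of c x "-x"] minus_unique[of "sc c x" "sc c (-x)"] by simp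
lemma sc_diff_right: "sc c (x - y) = sc c x - sc c y"
  using sc_add_right[of c x "-y"] sc_minus_right[of c y] by simp
lemma sc_minus_left: "sc (-c) x = - sc c x"
  using sc_add_left[of c "-c" x] minus_unique[of "sc c x" "sc (-c) x"] by simp
lemma sc_diff_left: "sc (c - d) x = sc c x - sc d x"
  using sc_add_left[of c "-d" x] sc_minus_left[of d x] by simp
lemma sc_sum_right: "sc c (sum f A) = (\<Sum>i\<in>A. sc c (f i))"
  by (induct A rule: infinite_finite_induct) (auto simp: sc_add_right)
lemma sc_sum_left: "sc (sum f A) x = (\<Sum>i\<in>A. sc (f i) x)"
  by (induct A rule: infinite_finite_induct) (auto simp: sc_add_left)
lemma sc_mult_both: "sc c x * sc d y = sc (c * d) (x * y)"
  by (simp add: sc_mult_left sc_mult_right sc_sc mult.commute)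

lemma st_zero[simp]: "st 0 = 0"
  using st_add[of 0 0] by simp
lemma st_minus: "st (- x) = - st x"
  using st_add[of x "-x"] minus_unique[of "st x" "st (-x)"] by simp
lemma st_diff: "st (x - y) = st x - st y"
  using st_add[of x "-y"] st_minus[of y] by simp
lemma st_sum: "st (sum f A) = (\<Sum>i\<in>A. st (f i))"
  by (induct A rule: infinite_finite_induct) (auto simp: st_add)
lemma st_one[simp]: "st 1 = 1"
proof -
  have "st (st 1 * 1) = st 1 * st (st 1)" by (rule st_mult)
  then have "st (st 1) = st 1" by (simp add: st_st)
  then show ?thesis by (simp add: st_st)
qed
lemma st_power: "st (x ^ n) = st x ^ n"
  by (induct n) (simp_all add: st_mult power_Suc2[symmetric] del: power_Suc2)

lemma norm_st[simp]: "norm (st x) = norm x"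
proof -
  have le: "norm y \<le> norm (st y)" for y
  proof (cases "y = 0")
    case False
    have "norm y ^ 2 = norm (st y * y)" by (simp add: cstar_id)
    also have "\<dots> \<le> norm (st y) * norm y" by (rule norm_mult_ineq)
    finally have "norm y * norm y \<le> norm (st y) * norm y" by (simp add: power2_eq_square)
    then show ?thesis using False by simp
  qed simp
  show ?thesis using le[of x] le[of "st x"] by (simp add: st_st)
qed

lemma norm_sq_normal:
  assumes "x * st x = st x * x"
  shows "norm (x * x) = norm x ^ 2"
proof -
  define h where "h = st x * x"
  have sh: "st h = h" unfolding h_def by (simp add: st_mult st_st)
  have "st (x * x) * (x * x) = st x * (st x * x) * x" by (simp add: st_mult mult.assoc)
  also have "\<dots> = st x * (x * st x) * x" by (simp only: assms)
  also have "\<dots> = h * h" unfolding h_def by (simp add: mult.assoc)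
  finally have 1: "st (x * x) * (x * x) = h * h" .
  have "norm (h * h) = norm h ^ 2" using cstar_id[of h] sh by simp
  also have "norm h = norm x ^ 2" unfolding h_def by (simp add: cstar_id)
  finally have "norm (x * x) ^ 2 = (norm x ^ 2) ^ 2" using cstar_id[of "x * x"] 1 by simp
  then show ?thesis by (metis power2_eq_iff_nonneg norm_ge_zero zero_le_power2)
qed

lemma norm_pow2_normal:
  assumes "x * st x = st x * x"
  shows "norm (x ^ (2^k)) = norm x ^ (2^k)"
proof (induct k)
  case (Suc k)
  define y where "y = x ^ (2^k)"
  have c: "x ^ m * st x ^ m = st x ^ m * x ^ m" for m
  proof -
    have "x ^ m * st x = st x * x ^ m" by (rule power_commuting_commutes[OF assms])
    then have "st x ^ m * x ^ m = x ^ m * st x ^ m"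
      by (intro power_commuting_commutes) simp
    then show ?thesis by simp
  qed
  have yn: "y * st y = st y * y" unfolding y_def st_power using c by simp
  have "x ^ (2 ^ Suc k) = y * y" unfolding y_def by (simp add: power_mult[symmetric] power2_eq_square[symmetric] mult.commute)
  then have "norm (x ^ (2 ^ Suc k)) = norm y ^ 2" using norm_sq_normal[OF yn] by simp
  also have "\<dots> = norm x ^ (2 ^ Suc k)" using Suc unfolding y_def by (simp add: power_mult[symmetric] mult.commute)
  finally show ?case .
qed simp

lemma neumann:
  fixes e y :: 'a
  assumes e: "e * e = e" "e * y = y" "y * e = y" and ny: "norm y < 1"
  shows "cinv e (e - y)"
proof -
  have "summable (\<lambda>n. norm y ^ n)" using ny by (simp add: summable_geometric)
  then have summ: "summable (\<lambda>n. y ^ n)"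
    using summable_comparison_test'[where g="\<lambda>n. norm y ^ n" and f = "\<lambda>n. y^n" and N=0]
    by (simp add: norm_power_ineq)
  define s where "s = suminf (\<lambda>n. y ^ n)"
  have ss: "(\<lambda>n. y ^ n) sums s" using summ unfolding s_def by (simp add: summable_sums)
  have "(\<lambda>n. y * y ^ n) sums (y * s)" by (rule sums_mult[OF ss])
  then have "(\<lambda>n. y ^ Suc n) sums (y * s)" by simp
  from sums_Suc[OF this] have "(\<lambda>n. y ^ n) sums (y * s + 1)" by simp
  then have a: "y * s + 1 = s" using ss sums_unique2 by blast
  have "(\<lambda>n. y ^ n * y) sums (s * y)" by (rule sums_mult2[OF ss])
  then have "(\<lambda>n. y ^ Suc n) sums (s * y)" by (simp add: power_Suc2 del: power_Suc)
  from sums_Suc[OF this] have "(\<lambda>n. y ^ n) sums (s * y + 1)" by simp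
  then have b: "s * y + 1 = s" using ss sums_unique2 by blast
  have ee: "e - y = e * (1 - y)" "e - y = (1 - y) * e" using e by (simp_all add: right_diff_distrib left_diff_distrib)
  have "(1 - y) * s = s - y * s" by (simp add: left_diff_distrib)
  then have 1: "(1 - y) * s = 1" by (metis a add_diff_cancel_left')
  have "s * (1 - y) = s - s * y" by (simp add: right_diff_distrib)
  then have 2: "s * (1 - y) = 1" by (metis b add_diff_cancel_left')
  have "(e - y) * (e * s * e) = ((e - y) * e) * s * e" by (simp add: mult.assoc)
  also have "(e - y) * e = e - y" using e by (simp add: left_diff_distrib)
  also have "(e - y) * s * e = e * ((1 - y) * s) * e" using ee(1) by (simp add: mult.assoc)
  finally have r: "(e - y) * (e * s * e) = e" using 1 e by simp
  have "(e * s * e) * (e - y) = e * s * (e * (e - y))" by (simp add: mult.assoc)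
  also have "e * (e - y) = e - y" using e by (simp add: right_diff_distrib)
  also have "e * s * (e - y) = e * (s * (1 - y)) * e" using ee(2) by (simp add: mult.assoc)
  finally have l: "(e * s * e) * (e - y) = e" using 2 e by simp
  have c: "e * (e * s * e) = e * s * e" "(e * s * e) * e = e * s * e" using e
    by (simp_all add: mult.assoc[symmetric]) (simp add: mult.assoc)
  show ?thesis unfolding cinv_def using r l c by blast
qed

end

context unital_cstar_algebra begin

lemma cinv_sc:
  fixes e y :: 'a
  assumes "cinv e y" "c \<noteq> 0"
  shows "cinv e (sc c y)"
proof -
  obtain w where w: "e * w = w" "w * e = w" "y * w = e" "w * y = e"
    using assms(1) unfolding cinv_def by blast
  have "e * sc (1/c) w = sc (1/c) w" "sc (1/c) w * e = sc (1/c) w"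
       "sc c y * sc (1/c) w = e" "sc (1/c) w * sc c y = e"
    using w assms(2) by (simp_all add: sc_mult_both sc_mult_left sc_mult_right sc_sc)
  then show ?thesis unfolding cinv_def by blast
qed

lemma root_unity_sum:
  fixes N m :: nat
  assumes "N \<ge> 1" "m < N"
  shows "(\<Sum>k<N. (exp (2 * complex_of_real pi * \<i> / of_nat N) ^ m) ^ k) = (if m = 0 then of_nat N else 0)"
proof (cases "m = 0")
  case False
  define q where "q = exp (2 * complex_of_real pi * \<i> / of_nat N) ^ m"
  have q1: "q \<noteq> 1"
  proof
    assume "q = 1"
    then have "exp (2 * complex_of_real pi * \<i> * of_nat m / of_nat N) = 1"
      unfolding q_def by (simp add: exp_of_nat_mult[symmetric] mult.commute mult.left_commute)
    then have "N dvd m" using complex_root_unity_eq_1[OF assms(1)] by simp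
    then show False using False assms(2) by (simp add: nat_dvd_not_less)
  qed
  have qN: "q ^ N = 1"
  proof -
    have "q ^ N = exp (2 * complex_of_real pi * \<i> / of_nat N) ^ (N * m)" unfolding q_def
      by (simp add: power_mult[symmetric] mult.commute)
    also have "\<dots> = exp (of_nat (N*m) * (2 * complex_of_real pi * \<i> / of_nat N))"
      by (rule exp_of_nat_mult[symmetric])
    also have "of_nat (N*m) * (2 * complex_of_real pi * \<i> / of_nat N) = \<i> * (of_nat m * (of_real pi * 2))"
      using assms(1) by (simp add: field_simps)
    also have "exp \<dots> = 1" by (rule exp_2pi_1_nat)
    finally show ?thesis .
  qed
  show ?thesis using False q1 qN unfolding q_def[symmetric] by (simp add: geometric_sum)
qed simp

lemma norm_exp_root: "cmod (exp (2 * complex_of_real pi * \<i> / of_nat N)) = 1"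
proof -
  have "2 * complex_of_real pi * \<i> / of_nat N = \<i> * complex_of_real (2 * pi / N)" by simp
  then show ?thesis by (simp only:) (rule norm_exp_i_times)
qed


lemma spectral_bound:
  fixes e a :: 'a and \<rho> :: real
  assumes e: "e * e = e" and ea: "e * a = a" "a * e = a" and nrm: "a * st a = st a * a"
    and rho: "\<rho> \<ge> 0" and inv: "\<And>\<mu>. cmod \<mu> > \<rho> \<Longrightarrow> cinv e (sc \<mu> e - a)"
  shows "norm a \<le> \<rho>"
proof (rule ccontr)
  assume "\<not> norm a \<le> \<rho>"
  define A where "A = norm a"
  have A: "A > \<rho>" "A > 0" using \<open>\<not> norm a \<le> \<rho>\<close> rho unfolding A_def by auto
  have ce: "cinv e e" unfolding cinv_def using e by blast
  have cinvt: "cinv e (e - sc t a)" if "cmod t * \<rho> < 1" for t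
  proof (cases "t = 0")
    case True then show ?thesis using ce by simp
  next
    case False
    have "cmod (1/t) > \<rho>" using that False by (simp add: norm_divide field_simps)
    then have "cinv e (sc (1/t) e - a)" by (rule inv)
    then have "cinv e (sc t (sc (1/t) e - a))" using False by (rule cinv_sc)
    moreover have "sc t (sc (1/t) e - a) = e - sc t a" using False by (simp add: sc_diff_right sc_sc)
    ultimately show ?thesis by simp
  qed
  define G where "G t = (THE w. e * w = w \<and> w * e = w \<and> (e - sc t a) * w = e \<and> w * (e - sc t a) = e)" for t
  have G: "e * G t = G t \<and> G t * e = G t \<and> (e - sc t a) * G t = e \<and> G t * (e - sc t a) = e"
    if ht: "cmod t * \<rho> < 1" for t
  proof -
    obtain w where w: "e * w = w \<and> w * e = w \<and> (e - sc t a) * w = e \<and> w * (e - sc t a) = e"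
      using cinvt[OF ht] unfolding cinv_def by blast
    have u: "\<And>x. (e * x = x \<and> x * e = x \<and> (e - sc t a) * x = e \<and> x * (e - sc t a) = e) \<Longrightarrow> x = w"
      using w cinv_unique by blast
    show ?thesis unfolding G_def by (rule theI[of _ w]) (use w u in blast)+
  qed
  have res: "G t - G s = sc (t - s) (G t * a * G s)" if "cmod t * \<rho> < 1" "cmod s * \<rho> < 1" for t s
  proof -
    note Gt = G[OF that(1)] and Gs = G[OF that(2)]
    have "G t = G t * ((e - sc s a) * G s)" using Gt Gs by simp
    moreover have "G s = (G t * (e - sc t a)) * G s" using Gt Gs by simp
    ultimately have "G t - G s = G t * ((e - sc s a) - (e - sc t a)) * G s"
      by (metis (no_types, lifting) mult.assoc right_diff_distrib left_diff_distrib)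
    also have "(e - sc s a) - (e - sc t a) = sc (t - s) a" by (simp add: sc_diff_left)
    finally show ?thesis by (simp add: sc_mult_left sc_mult_right)
  qed
  define r1 where "r1 = (if \<rho> = 0 then 2/A else (1/A + 1/\<rho>)/2)"
  have r1: "1/A < r1" "r1 * \<rho> < 1" "r1 > 0"
  proof -
    show "1/A < r1"
    proof (cases "\<rho> = 0")
      case False
      then have "1/A < 1/\<rho>" using A rho by (simp add: frac_less2)
      then show ?thesis using False unfolding r1_def by simp
    qed (use A in \<open>simp add: r1_def divide_strict_right_mono\<close>)
    show "r1 * \<rho> < 1"
    proof (cases "\<rho> = 0")
      case False
      then have "1/A < 1/\<rho>" using A rho by (simp add: frac_less2)
      then have "r1 < 1/\<rho>" using False unfolding r1_def by simp
      then show ?thesis using False rho by (simp add: field_simps)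
    qed (simp add: r1_def)
    show "r1 > 0" using A rho unfolding r1_def by (auto intro: add_pos_pos)
  qed
  define K where "K = cball (0::complex) r1"
  have inK: "cmod t * \<rho> < 1" if "t \<in> K" for t
  proof -
    have "cmod t \<le> r1" using that unfolding K_def by simp
    then have "cmod t * \<rho> \<le> r1 * \<rho>" using rho by (rule mult_right_mono)
    then show ?thesis using r1 by simp
  qed
  have normres: "norm (G t - G s) \<le> cmod (t - s) * (norm (G t) * A * norm (G s))"
    if "t \<in> K" "s \<in> K" for t s
  proof -
    have "norm (G t - G s) = cmod (t - s) * norm (G t * a * G s)"
      using res[OF inK[OF that(1)] inK[OF that(2)]] by (simp add: norm_sc)
    also have "norm (G t * a * G s) \<le> norm (G t) * A * norm (G s)"
      unfolding A_def by (metis norm_mult_ineq mult_right_mono norm_ge_zero order_trans)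
    finally show ?thesis by (simp add: mult_left_mono)
  qed
  have contG: "continuous_on K G"
    unfolding continuous_on_iff
  proof (intro ballI allI impI)
    fix s and \<epsilon> :: real assume s: "s \<in> K" and \<epsilon>: "0 < \<epsilon>"
    define g where "g = norm (G s)"
    have g0: "g \<ge> 0" unfolding g_def by simp
    define \<delta> where "\<delta> = min (1/(2*A*g+1)) (\<epsilon>/(2*g*g*A+1))"
    have p1: "2*A*g+1 > 0" "2*g*g*A+1 > 0" using A g0 by (simp_all add: add_nonneg_pos)
    have \<delta>: "\<delta> > 0" using \<epsilon> p1 by (simp add: \<delta>_def)
    show "\<exists>\<delta>>0. \<forall>t\<in>K. dist t s < \<delta> \<longrightarrow> dist (G t) (G s) < \<epsilon>"
    proof (intro exI conjI ballI impI)
      show "\<delta> > 0" by (rule \<delta>)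
      fix t assume t: "t \<in> K" "dist t s < \<delta>"
      define d where "d = cmod (t - s)"
      have d0: "d \<ge> 0" unfolding d_def by simp
      have d1: "d * (2*A*g+1) \<le> 1"
      proof -
        have "d \<le> 1/(2*A*g+1)" using t unfolding d_def \<delta>_def by (simp add: dist_norm)
        then show ?thesis using p1 by (simp add: pos_le_divide_eq)
      qed
      have d2: "d * (2*g*g*A+1) < \<epsilon>"
      proof -
        have "d < \<epsilon>/(2*g*g*A+1)" using t unfolding d_def \<delta>_def by (simp add: dist_norm)
        then show ?thesis using p1 by (simp add: pos_less_divide_eq)
      qed
      have n1: "norm (G t - G s) \<le> d * (norm (G t) * A * g)"
        using normres[OF t(1) s] unfolding d_def g_def .
      have "norm (G t) \<le> g + norm (G t - G s)" unfolding g_def by (metis norm_triangle_sub)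
      also have "\<dots> \<le> g + norm (G t) * (d * A * g)" using n1 by (simp add: algebra_simps)
      also have "norm (G t) * (d * A * g) \<le> norm (G t) * (1/2)"
        apply (rule mult_left_mono) using d1 d0 A g0 by (simp_all add: algebra_simps)
      finally have nGt: "norm (G t) \<le> 2 * g" by simp
      have "norm (G t - G s) \<le> d * (2 * g * A * g)"
        using n1 nGt d0 A g0 by (smt (verit) mult_left_mono mult_right_mono)
      also have "\<dots> < \<epsilon>" using d2 d0 by (simp add: algebra_simps)
      finally show "dist (G t) (G s) < \<epsilon>" by (simp add: dist_norm)
    qed
  qed
  have "compact K" by (simp add: K_def)
  then have "bounded (G ` K)" using contG compact_continuous_image compact_imp_bounded by blast
  then obtain M where M: "M > 0" "\<And>t. t \<in> K \<Longrightarrow> norm (G t) \<le> M" unfolding bounded_pos by auto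
  have lip: "norm (G t - G s) \<le> cmod (t - s) * (M * A * M)" if "t \<in> K" "s \<in> K" for t s
  proof -
    have "norm (G t) * A * norm (G s) \<le> M * A * M"
      using M(2)[OF that(1)] M(2)[OF that(2)] A by (simp add: mult_mono')
    then show ?thesis using normres[OF that] by (smt (verit) mult_left_mono norm_ge_zero)
  qed
  have Gc: "e * G t = G t" "G t * e = G t" "(e - sc t a) * G t = e" "G t * (e - sc t a) = e"
    if "t \<in> K" for t
    using G[OF inK[OF that]] by auto
  have ean: "e * a ^ n = a ^ n" if "n \<ge> 1" for n
    using that by (cases n) (simp_all add: ea mult.assoc[symmetric])
  have Pid: "G s * (e - sc (s^N) (e * a^N)) = (\<Sum>m<N. sc (s^m) (e * a^m))" if sK: "s \<in> K" for s N
  proof (induct N)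
    case 0 show ?case using e by simp
  next
    case (Suc N)
    have 1: "(e - sc s a) * (e * a^N) = e * a^N - sc s (e * a^Suc N)"
      by (simp add: left_diff_distrib sc_mult_left mult.assoc[symmetric] e ea)
    have 2: "e - sc (s^Suc N) (e * a^Suc N) = (e - sc (s^N) (e * a^N)) + sc (s^N) ((e - sc s a) * (e * a^N))"
      unfolding 1 by (simp add: sc_diff_right sc_sc mult.commute)
    have "G s * (e - sc (s^Suc N) (e * a^Suc N)) = G s * (e - sc (s^N) (e * a^N)) + sc (s^N) (G s * (e - sc s a) * (e * a^N))"
      unfolding 2 by (simp add: distrib_left sc_mult_right mult.assoc)
    also have "G s * (e - sc s a) * (e * a^N) = e * a^N" using Gc[OF sK] e by (simp add: mult.assoc[symmetric])
    finally show ?case using Suc by simp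
  qed
  define \<omega> where "\<omega> N = exp (2 * complex_of_real pi * \<i> / of_nat N)" for N :: nat
  have \<omega>N: "\<omega> N ^ N = 1" if "N \<ge> 1" for N
  proof -
    have "\<omega> N ^ N = exp (of_nat N * (2 * complex_of_real pi * \<i> / of_nat N))"
      unfolding \<omega>_def by (rule exp_of_nat_mult[symmetric])
    also have "of_nat N * (2 * complex_of_real pi * \<i> / of_nat N) = \<i> * (of_nat 1 * (of_real pi * 2))"
      using that by (simp add: field_simps)
    also have "exp \<dots> = 1" by (rule exp_2pi_1_nat)
    finally show ?thesis .
  qed
  have \<omega>abs: "cmod (\<omega> N ^ k * t) = cmod t" for N k t
    by (simp add: \<omega>_def norm_mult norm_power norm_exp_root)
  have inKw: "\<omega> N ^ k * t \<in> K" if "t \<in> K" for N k t using that \<omega>abs by (simp add: K_def)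
  define MN where "MN N t = sc (1 / of_nat N) (\<Sum>k<N. G (\<omega> N ^ k * t))" for N t
  have MNid: "MN N t * (e - sc (t^N) (e * a^N)) = e" if N1: "N \<ge> 1" and tK: "t \<in> K" for N t
  proof -
    have pw: "(\<omega> N ^ k * t)^N = t^N" for k
    proof -
      have "(\<omega> N ^ k)^N = (\<omega> N ^ N)^k" by (simp add: power_mult[symmetric] mult.commute)
      then show ?thesis using \<omega>N[OF N1] by (simp add: power_mult_distrib)
    qed
    have pw2: "(\<omega> N ^ k * t)^m = t^m * (\<omega> N ^ m)^k" for k m
      by (simp add: power_mult_distrib power_mult[symmetric] mult.commute)
    have "(\<Sum>k<N. G (\<omega> N ^ k * t)) * (e - sc (t^N) (e * a^N))
        = (\<Sum>k<N. G (\<omega> N ^ k * t) * (e - sc ((\<omega> N ^ k * t)^N) (e * a^N)))"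
      by (simp add: sum_distrib_right pw)
    also have "\<dots> = (\<Sum>k<N. \<Sum>m<N. sc ((\<omega> N ^ k * t)^m) (e * a^m))"
      using Pid inKw tK by simp
    also have "\<dots> = (\<Sum>m<N. sc (\<Sum>k<N. (\<omega> N ^ k * t)^m) (e * a^m))"
      by (subst sum.swap) (simp add: sc_sum_left)
    also have "\<dots> = (\<Sum>m<N. sc (t^m * (\<Sum>k<N. (\<omega> N ^ m)^k)) (e * a^m))"
      by (simp add: pw2 sum_distrib_left)
    also have "\<dots> = (\<Sum>m<N. if m = 0 then sc (of_nat N) e else 0)"
    proof (rule sum.cong[OF refl])
      fix m assume "m \<in> {..<N}"
      then show "sc (t^m * (\<Sum>k<N. (\<omega> N ^ m)^k)) (e * a^m) = (if m = 0 then sc (of_nat N) e else 0)"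
        using root_unity_sum[OF N1, of m] unfolding \<omega>_def by simp
    qed
    also have "\<dots> = sc (of_nat N) e" using N1 by (simp add: sum.delta)
    finally have "(\<Sum>k<N. G (\<omega> N ^ k * t)) * (e - sc (t^N) (e * a^N)) = sc (of_nat N) e" .
    then show ?thesis unfolding MN_def using N1 by (simp add: sc_mult_left sc_sc)
  qed
  have MNe: "MN N t * e = MN N t" if "t \<in> K" for N t
    unfolding MN_def using Gc(2) inKw[OF that] by (simp add: sc_mult_left sum_distrib_right)
  have MNnorm: "norm (MN N t) \<le> M" if N1: "N \<ge> 1" and tK: "t \<in> K" for N t
  proof -
    have "norm (\<Sum>k<N. G (\<omega> N ^ k * t)) \<le> (\<Sum>k<N. norm (G (\<omega> N ^ k * t)))" by (rule norm_sum)
    also have "\<dots> \<le> of_nat N * M"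
      using sum_bounded_above[of "{..<N}" "\<lambda>k. norm (G (\<omega> N ^ k * t))" M] M(2) inKw[OF tK] by simp
    finally have "norm (\<Sum>k<N. G (\<omega> N ^ k * t)) \<le> of_nat N * M" .
    then show ?thesis unfolding MN_def using N1 by (simp add: norm_sc norm_divide field_simps)
  qed
  have MNdiff: "norm (MN N t - MN N s) \<le> cmod (t - s) * (M * A * M)" if N1: "N \<ge> 1" and tK: "t \<in> K" and sK: "s \<in> K" for N t s
  proof -
    have "MN N t - MN N s = sc (1 / of_nat N) (\<Sum>k<N. G (\<omega> N ^ k * t) - G (\<omega> N ^ k * s))"
      unfolding MN_def by (simp add: sc_diff_right sum_subtractf)
    moreover have "norm (\<Sum>k<N. G (\<omega> N ^ k * t) - G (\<omega> N ^ k * s)) \<le> of_nat N * (cmod (t - s) * (M * A * M))"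
    proof -
      have "norm (\<Sum>k<N. G (\<omega> N ^ k * t) - G (\<omega> N ^ k * s)) \<le> (\<Sum>k<N. norm (G (\<omega> N ^ k * t) - G (\<omega> N ^ k * s)))"
        by (rule norm_sum)
      also have "\<dots> \<le> of_nat N * (cmod (t - s) * (M * A * M))"
      proof (rule sum_bounded_above[of "{..<N}", simplified])
        fix k
        have "cmod (\<omega> N ^ k * t - \<omega> N ^ k * s) = cmod (t - s)"
          using \<omega>abs[of N k "t - s"] by (simp add: right_diff_distrib)
        then show "norm (G (\<omega> N ^ k * t) - G (\<omega> N ^ k * s)) \<le> cmod (t - s) * (M * A * M)"
          using lip[OF inKw[OF tK] inKw[OF sK], of N k N k] by simp
      qed
      finally show ?thesis .
    qed
    ultimately show ?thesis using N1 by (simp add: norm_sc norm_divide field_simps)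
  qed
  define dd where "dd = min (min (r1 - 1/A) (1/A)) (1/(4*M*A*M + 1))"
  have pMAM: "M*A*M > 0" using M A by simp
  have dd: "dd > 0" "dd \<le> r1 - 1/A" "dd \<le> 1/A" "dd * (M*A*M) < 1/4"
  proof -
    show "dd > 0" using r1 A pMAM unfolding dd_def by (simp add: add_pos_pos)
    show "dd \<le> r1 - 1/A" "dd \<le> 1/A" unfolding dd_def by auto
    have "dd \<le> 1/(4*M*A*M + 1)" unfolding dd_def by auto
    then have "dd * (4*M*A*M + 1) \<le> 1" using pMAM by (simp add: pos_le_divide_eq)
    then show "dd * (M*A*M) < 1/4" using \<open>dd > 0\<close> by (simp add: algebra_simps)
  qed
  define r' where "r' = 1/A - dd/2"
  define r where "r = 1/A + dd/2"
  have rr: "r' > 0" "r' * A < 1" "r * A > 1" "r \<le> r1" "r - r' = dd" "r > 0"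
  proof -
    show "r' > 0" using dd A unfolding r'_def by simp
    have "r' < 1/A" using dd unfolding r'_def by simp
    then show "r' * A < 1" using A by (simp add: field_simps)
    have "r > 1/A" using dd unfolding r_def by simp
    then show "r * A > 1" using A by (simp add: field_simps)
    show "r \<le> r1" using dd unfolding r_def by simp
    show "r - r' = dd" unfolding r_def r'_def by simp
    show "r > 0" using dd A unfolding r_def by simp
  qed
  have r'K: "complex_of_real r' \<in> K" using rr r1 dd unfolding K_def by simp
  have rK: "complex_of_real r \<in> K" using rr unfolding K_def by simp
  have "(\<lambda>n. (r' * A)^n) \<longlonglongrightarrow> 0" using rr A by (intro LIMSEQ_realpow_zero) simp_all
  from order_tendstoD(2)[OF this, of "1/(4*M)"] M obtain n0 where
    n0: "\<And>n. n \<ge> n0 \<Longrightarrow> (r' * A)^n < 1/(4*M)"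
    by (auto simp: eventually_sequentially)
  define N where "N = (2::nat)^n0"
  have N1: "N \<ge> 1" by (simp add: N_def)
  have "n0 \<le> N" unfolding N_def by (simp add: less_exp less_imp_le)
  then have smallN: "(r' * A)^N < 1/(4*M)" by (rule n0)
  have normaN: "norm (a^N) = A^N" using norm_pow2_normal[OF nrm] unfolding N_def A_def by simp
  have eaN: "e * a^N = a^N" using ean N1 by simp
  define b' where "b' = sc (complex_of_real r' ^ N) (a^N)"
  define b where "b = sc (complex_of_real r ^ N) (a^N)"
  have nb': "norm b' = (r' * A)^N" unfolding b'_def using rr normaN
    by (simp add: norm_sc norm_power power_mult_distrib)
  have nb: "norm b = (r * A)^N" unfolding b_def using rr normaN
    by (simp add: norm_sc norm_power power_mult_distrib)
  have id': "MN N (complex_of_real r') * (e - b') = e" using MNid[OF N1 r'K] eaN unfolding b'_def by simp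
  have id: "MN N (complex_of_real r) * (e - b) = e" using MNid[OF N1 rK] eaN unfolding b_def by simp
  have "MN N (complex_of_real r') - e = MN N (complex_of_real r') * b'"
  proof -
    have "MN N (complex_of_real r') - MN N (complex_of_real r') * b' = e"
      using id' MNe[OF r'K] by (simp add: right_diff_distrib)
    then have "MN N (complex_of_real r') - e = MN N (complex_of_real r') - (MN N (complex_of_real r') - MN N (complex_of_real r') * b')" by simp
    then show ?thesis by simp
  qed
  then have "norm (MN N (complex_of_real r') - e) \<le> M * (r' * A)^N"
  proof -
    have "norm (MN N (complex_of_real r') * b') \<le> norm (MN N (complex_of_real r')) * norm b'" by (rule norm_mult_ineq)
    also have "\<dots> \<le> M * norm b'" by (rule mult_right_mono[OF MNnorm[OF N1 r'K]]) simp
    finally show ?thesis using nb' by (simp add: \<open>MN N (complex_of_real r') - e = MN N (complex_of_real r') * b'\<close>)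
  qed
  also have "\<dots> < M * (1/(4*M))" by (rule mult_strict_left_mono[OF smallN M(1)])
  also have "\<dots> = 1/4" using M by simp
  finally have D1: "norm (MN N (complex_of_real r') - e) < 1/4" .
  have "norm (MN N (complex_of_real r) - MN N (complex_of_real r')) \<le> cmod (complex_of_real r - complex_of_real r') * (M * A * M)"
    by (rule MNdiff[OF N1 rK r'K])
  also have "cmod (complex_of_real r - complex_of_real r') = dd"
  proof -
    have "complex_of_real r - complex_of_real r' = complex_of_real dd" using rr by (simp flip: of_real_diff)
    then show ?thesis using dd by simp
  qed
  finally have D2: "norm (MN N (complex_of_real r) - MN N (complex_of_real r')) < 1/4" using dd by simp
  define D where "D = MN N (complex_of_real r) - e"
  have nD: "norm D < 1/2"
  proof -
    have "norm D \<le> norm (MN N (complex_of_real r) - MN N (complex_of_real r')) + norm (MN N (complex_of_real r') - e)"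
      unfolding D_def by (metis norm_triangle_ineq diff_add_cancel add_diff_eq)
    then show ?thesis using D1 D2 by simp
  qed
  have eb: "e * b = b" unfolding b_def using eaN by (simp add: sc_mult_right)
  have h: "MN N (complex_of_real r) - MN N (complex_of_real r) * b = e"
    using id MNe[OF rK] by (simp add: right_diff_distrib)
  have bD: "b = D - D * b"
  proof -
    have "D - D * b = (MN N (complex_of_real r) - MN N (complex_of_real r) * b) - e + e * b"
      unfolding D_def by (simp add: left_diff_distrib)
    then show ?thesis using h eb by simp
  qed
  have "norm b \<le> norm D + norm D * norm b"
    using bD by (metis norm_triangle_ineq4 norm_mult_ineq add_left_mono order_trans)
  also have "\<dots> \<le> 1/2 + 1/2 * norm b" using nD by (intro add_mono mult_right_mono) simp_all
  finally have "norm b \<le> 1/2 + 1/2 * norm b" .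
  then have "norm b \<le> 1" by simp
  moreover have "norm b \<ge> 1" using nb rr by (simp add: one_le_power)
  moreover have "norm b \<noteq> 1"
  proof -
    have "norm b \<le> norm D * (1 + norm b)" using \<open>norm b \<le> norm D + norm D * norm b\<close> by (simp add: algebra_simps)
    also have "\<dots> < 1/2 * (1 + norm b)" using nD by (intro mult_strict_right_mono) (simp_all add: add_pos_nonneg)
    finally show ?thesis by auto
  qed
  ultimately show False by simp
qed
end

lemma inverse_circle: "cmod (w::complex) = 1 \<Longrightarrow> inverse w = cnj w"
  by (simp add: divide_conv_cnj inverse_eq_divide)

locale cu = unital_cstar_algebra sc st
  for sc :: "complex \<Rightarrow> 'a::{banach, real_normed_algebra_1} \<Rightarrow> 'a" and st +
  fixes e z :: 'a
  assumes e_st: "st e = e" and e_idem: "e * e = e" and ez: "e * z = z" and ze: "z * e = z"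
    and zz1: "st z * z = e" and zz2: "z * st z = e"
begin

lemma ezs: "e * st z = st z" using ze st_mult[of z e] e_st by simp
lemma zse: "st z * e = st z" using ez st_mult[of e z] e_st by simp

definition polyE :: "'a \<Rightarrow> complex poly \<Rightarrow> 'a" where
  "polyE y P = fold_coeffs (\<lambda>c acc. sc c e + y * acc) P 0"

lemma polyE_0[simp]: "polyE y 0 = 0" by (simp add: polyE_def)

lemma polyE_pCons: "polyE y (pCons c P) = sc c e + y * polyE y P"
  by (cases "P = 0 \<and> c = 0")
     (auto simp: polyE_def fold_coeffs_pCons_coeff_not_0_eq fold_coeffs_pCons_not_0_0_eq)

context
  fixes y :: 'a assumes ey: "e * y = y" and ye: "y * e = y"
begin

lemma polyE_corner: "e * polyE y P = polyE y P" "polyE y P * e = polyE y P"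
proof -
  have "e * polyE y P = polyE y P \<and> polyE y P * e = polyE y P"
  proof (induct P)
    case (pCons c P)
    then show ?case using ey ye e_idem
      by (simp add: polyE_pCons distrib_left distrib_right sc_mult_left sc_mult_right mult.assoc[symmetric])
         (simp add: mult.assoc)
  qed simp
  then show "e * polyE y P = polyE y P" "polyE y P * e = polyE y P" by auto
qed

lemma polyE_add: "polyE y (P + Q) = polyE y P + polyE y Q"
proof (induct P arbitrary: Q)
  case (pCons a P)
  then show ?case by (cases Q) (simp add: polyE_pCons sc_add_left distrib_left algebra_simps)
qed simp

lemma polyE_smult: "polyE y (smult c P) = sc c (polyE y P)"
  by (induct P) (simp_all add: polyE_pCons sc_add_right sc_sc sc_mult_right)

lemma polyE_mult: "polyE y (P * Q) = polyE y P * polyE y Q"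
proof (induct P)
  case (pCons a P)
  have "polyE y (pCons a P * Q) = sc a (polyE y Q) + y * (polyE y P * polyE y Q)"
    using pCons by (simp add: polyE_add polyE_smult polyE_pCons)
  also have "\<dots> = (sc a e + y * polyE y P) * polyE y Q"
    using polyE_corner by (simp add: distrib_right sc_mult_left mult.assoc)
  finally show ?case by (simp add: polyE_pCons)
qed simp

lemma polyE_const: "polyE y [:c:] = sc c e" by (simp add: polyE_pCons)

lemma polyE_linear: "polyE y [:-r, 1:] = y - sc r e"
  using ye by (simp add: polyE_pCons sc_minus_left)

lemma polyE_monom: "polyE y (monom c k) = sc c (e * y ^ k)"
proof (induct k)
  case 0 then show ?case by (simp add: monom_0 polyE_const)
next
  case (Suc k)
  have "polyE y (monom c (Suc k)) = y * sc c (e * y ^ k)" using Suc by (simp add: monom_Suc polyE_pCons)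
  also have "\<dots> = sc c (e * y ^ Suc k)" using ey ye by (simp add: sc_mult_right mult.assoc[symmetric])
  finally show ?case .
qed

lemma polyE_commute:
  assumes "w * y = y * w" "w * e = e * w"
  shows "w * polyE y P = polyE y P * w"
proof (induct P)
  case (pCons c P)
  have "w * (y * polyE y P) = y * polyE y P * w" using pCons assms
    by (metis mult.assoc)
  then show ?case using assms
    by (simp add: polyE_pCons distrib_left distrib_right sc_mult_left sc_mult_right)
qed simp

end

lemma powe_suc: "z ^ Suc m * e = z ^ Suc m" "e * z ^ Suc m = z ^ Suc m"
  "st z ^ Suc m * e = st z ^ Suc m" "e * st z ^ Suc m = st z ^ Suc m"
proof -
  show "z ^ Suc m * e = z ^ Suc m" by (simp only: power_Suc2 mult.assoc ze)
  show "e * z ^ Suc m = z ^ Suc m" by (simp only: power_Suc mult.assoc[symmetric] ez)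
  show "st z ^ Suc m * e = st z ^ Suc m" by (simp only: power_Suc2 mult.assoc zse)
  show "e * st z ^ Suc m = st z ^ Suc m" by (simp only: power_Suc mult.assoc[symmetric] ezs)
qed

lemma powe: "z ^ m * e = e * z ^ m" "st z ^ m * e = e * st z ^ m"
  by (cases m; simp only: powe_suc power_0 mult_1_left mult_1_right)+

lemma zpow_corner: "e * (e * z ^ m) = e * z ^ m" "(e * z ^ m) * e = e * z ^ m"
proof -
  show "e * (e * z ^ m) = e * z ^ m" by (simp only: mult.assoc[symmetric] e_idem)
  have "(e * z ^ m) * e = e * (e * z ^ m)" by (simp only: mult.assoc powe)
  then show "(e * z ^ m) * e = e * z ^ m" by (simp only: mult.assoc[symmetric] e_idem)
qed

lemma cinv_z: "cinv e z"
  unfolding cinv_def using ezs zse zz1 zz2 by blast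

lemma cinv_zpow: "cinv e (e * z ^ m)"
proof (induct m)
  case 0 then show ?case unfolding cinv_def using e_idem by auto
next
  case (Suc m)
  have "e * z ^ Suc m = z * (e * z ^ m)" using ez ze by (simp add: mult.assoc[symmetric])
  moreover have "cinv e (z * (e * z ^ m))"
    by (rule cinv_mult[OF cinv_z Suc]) (use ze zpow_corner in auto)
  ultimately show ?case by simp
qed

inductive pr :: "(complex \<Rightarrow> complex) \<Rightarrow> 'a \<Rightarrow> bool" where
  pr_const: "pr (\<lambda>_. c) (sc c e)"
| pr_id: "pr (\<lambda>w. w) z"
| pr_inv: "pr (\<lambda>w. inverse w) (st z)"
| pr_add: "pr f x \<Longrightarrow> pr g y \<Longrightarrow> pr (\<lambda>w. f w + g w) (x + y)"
| pr_mult: "pr f x \<Longrightarrow> pr g y \<Longrightarrow> pr (\<lambda>w. f w * g w) (x * y)"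

lemma pr_basic:
  assumes "pr f x"
  shows "x * z = z * x \<and> x * st z = st z * x \<and> e * x = x \<and> x * e = x"
  using assms
proof (induct)
  case (pr_const c)
  then show ?case using ez ze ezs zse e_idem by (simp add: sc_mult_left sc_mult_right)
next
  case pr_id then show ?case using ez ze zz1 zz2 by simp
next
  case pr_inv then show ?case using ezs zse zz1 zz2 by simp
next
  case (pr_add f x g y) then show ?case by (simp add: distrib_left distrib_right)
next
  case (pr_mult f x g y) then show ?case by (metis mult.assoc)
qed

lemma pr_comm:
  assumes "pr f x" "pr g y"
  shows "x * y = y * x"
  using assms(1)
proof (induct)
  case (pr_const c)
  have "e * y = y" "y * e = y" using pr_basic[OF assms(2)] by auto
  then show ?case by (simp add: sc_mult_left sc_mult_right)
next
  case pr_id then show ?case using pr_basic[OF assms(2)] by simp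
next
  case pr_inv then show ?case using pr_basic[OF assms(2)] by simp
next
  case (pr_add f x g y) then show ?case by (simp add: distrib_left distrib_right)
next
  case (pr_mult f x g y) then show ?case by (metis mult.assoc)
qed

lemma pr_star:
  assumes "pr f x"
  shows "\<exists>g. pr g (st x) \<and> (\<forall>w. cmod w = 1 \<longrightarrow> g w = cnj (f w))"
  using assms
proof (induct)
  case (pr_const c)
  have "pr (\<lambda>_. cnj c) (st (sc c e))" using pr.pr_const[of "cnj c"] by (simp add: st_sc e_st)
  then show ?case by auto
next
  case pr_id
  have "pr (\<lambda>w. inverse w) (st z)" by (rule pr.pr_inv)
  then show ?case using inverse_circle by auto
next
  case pr_inv
  have "pr (\<lambda>w. w) (st (st z))" by (simp add: st_st pr.pr_id)
  moreover have "cmod w = 1 \<Longrightarrow> w = cnj (inverse w)" for w using inverse_circle[of w] by simp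
  ultimately show ?case by blast
next
  case (pr_add f x g y)
  then obtain f' g' where "pr f' (st x)" "pr g' (st y)" "\<forall>w. cmod w = 1 \<longrightarrow> f' w = cnj (f w)"
    "\<forall>w. cmod w = 1 \<longrightarrow> g' w = cnj (g w)" by blast
  then show ?case by (intro exI[of _ "\<lambda>w. f' w + g' w"]) (simp add: st_add pr.pr_add)
next
  case (pr_mult f x g y)
  then obtain f' g' where "pr f' (st x)" "pr g' (st y)" "\<forall>w. cmod w = 1 \<longrightarrow> f' w = cnj (f w)"
    "\<forall>w. cmod w = 1 \<longrightarrow> g' w = cnj (g w)" by blast
  then show ?case by (intro exI[of _ "\<lambda>w. g' w * f' w"]) (simp add: st_mult pr.pr_mult)
qed

lemma zk_poly: "z ^ k * polyE z Q = polyE z (monom 1 k * Q)"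
proof -
  have "polyE z (monom 1 k * Q) = e * z ^ k * polyE z Q"
    by (simp add: polyE_mult[OF ez ze] polyE_monom[OF ez ze])
  also have "\<dots> = z ^ k * e * polyE z Q" by (simp only: powe)
  also have "\<dots> = z ^ k * polyE z Q" by (simp only: mult.assoc polyE_corner[OF ez ze])
  finally show ?thesis by simp
qed

lemma pr_rep:
  assumes "pr f x"
  shows "\<exists>m P. z ^ m * x = polyE z P \<and> (\<forall>w. w \<noteq> 0 \<longrightarrow> f w * w ^ m = poly P w)"
  using assms
proof (induct)
  case (pr_const c)
  show ?case by (rule exI[of _ 0], rule exI[of _ "[:c:]"]) (simp add: polyE_const[OF ez ze])
next
  case pr_id
  show ?case by (rule exI[of _ 0], rule exI[of _ "[:0, 1:]"]) (simp add: polyE_pCons ze)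
next
  case pr_inv
  show ?case by (rule exI[of _ 1], rule exI[of _ "[:1:]"]) (simp add: polyE_const[OF ez ze] zz2)
next
  case (pr_add f x g y)
  then obtain m P m' P' where h: "z ^ m * x = polyE z P" "\<forall>w. w \<noteq> 0 \<longrightarrow> f w * w ^ m = poly P w"
    "z ^ m' * y = polyE z P'" "\<forall>w. w \<noteq> 0 \<longrightarrow> g w * w ^ m' = poly P' w" by blast
  have p1: "z ^ (m + m') = z ^ m' * z ^ m" by (simp only: power_add[symmetric] add.commute)
  have p2: "z ^ (m + m') = z ^ m * z ^ m'" by (simp only: power_add)
  have "z ^ (m + m') * (x + y) = z ^ (m + m') * x + z ^ (m + m') * y" by (rule distrib_left)
  also have "z ^ (m + m') * x = z ^ m' * (z ^ m * x)" by (simp only: p1 mult.assoc)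
  also have "z ^ (m + m') * y = z ^ m * (z ^ m' * y)" by (simp only: p2 mult.assoc)
  also have "z ^ m' * (z ^ m * x) + z ^ m * (z ^ m' * y) = polyE z (monom 1 m' * P + monom 1 m * P')"
    by (simp only: h zk_poly polyE_add[OF ez ze])
  finally have 1: "z ^ (m + m') * (x + y) = polyE z (monom 1 m' * P + monom 1 m * P')" .
  have 2: "(f w + g w) * w ^ (m + m') = poly (monom 1 m' * P + monom 1 m * P') w" if "w \<noteq> 0" for w
  proof -
    have "(f w + g w) * w ^ (m + m') = w ^ m' * (f w * w ^ m) + w ^ m * (g w * w ^ m')"
      by (simp add: power_add algebra_simps)
    also have "\<dots> = poly (monom 1 m' * P + monom 1 m * P') w" using h that by (simp add: poly_monom)
    finally show ?thesis .
  qed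
  show ?case using 1 2 by blast
next
  case (pr_mult f x g y)
  then obtain m P m' P' where h: "z ^ m * x = polyE z P" "\<forall>w. w \<noteq> 0 \<longrightarrow> f w * w ^ m = poly P w"
    "z ^ m' * y = polyE z P'" "\<forall>w. w \<noteq> 0 \<longrightarrow> g w * w ^ m' = poly P' w" by blast
  have "x * z = z * x" using pr_basic[OF pr_mult(1)] by simp
  then have xz: "z ^ k * x = x * z ^ k" for k by (intro power_commuting_commutes) simp
  have "(z ^ m * x) * (z ^ m' * y) = z ^ m * (x * z ^ m') * y" by (simp only: mult.assoc)
  also have "x * z ^ m' = z ^ m' * x" by (simp only: xz)
  also have "z ^ m * (z ^ m' * x) * y = z ^ (m + m') * (x * y)" by (simp only: power_add mult.assoc)
  finally have 1: "z ^ (m + m') * (x * y) = polyE z (P * P')" using h by (simp add: polyE_mult[OF ez ze])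
  have 2: "(f w * g w) * w ^ (m + m') = poly (P * P') w" if "w \<noteq> 0" for w
  proof -
    have "(f w * g w) * w ^ (m + m') = (f w * w ^ m) * (g w * w ^ m')"
      by (simp add: power_add algebra_simps)
    then show ?thesis using h that by simp
  qed
  show ?case using 1 2 by blast
qed

end

lemma cinv_cancel_left:
  fixes e :: "'a::ring_1"
  assumes "cinv e a" "cinv e (a * y)" "e * y = y" "a * e = a" "e * a = a"
  shows "cinv e y"
proof -
  obtain w where w: "e * w = w" "w * e = w" "a * w = e" "w * a = e" using assms(1) unfolding cinv_def by blast
  have cw: "cinv e w" unfolding cinv_def using w assms(4) by (metis mult.assoc)
  have "cinv e (w * (a * y))" by (rule cinv_mult[OF cw assms(2)]) (use w assms in \<open>simp_all add: mult.assoc[symmetric]\<close>)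
  moreover have "w * (a * y) = y" using w assms by (simp add: mult.assoc[symmetric])
  ultimately show ?thesis by simp
qed

context cu begin

definition X :: "complex set" where
  "X = {l. cmod l = 1 \<and> (\<forall>f x. pr f x \<longrightarrow> cmod (f l) \<le> norm x)}"

lemma norm_e: "norm e \<le> 1"
proof -
  have "norm e = norm e ^ 2" using cstar_id[of e] e_st e_idem by simp
  then have "norm e = 0 \<or> norm e = 1" by (metis power2_eq_square mult_cancel_right1 mult_eq_0_iff)
  then show ?thesis by auto
qed

lemma norm_z: "norm z \<le> 1" "norm (st z) \<le> 1"
proof -
  have "norm z ^ 2 \<le> 1" using cstar_id[of z] zz1 norm_e by simp
  then show 1: "norm z \<le> 1" using power2_le_imp_le[of "norm z" 1] by simp
  then show "norm (st z) \<le> 1" by simp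
qed


lemma cinv_e: "cinv e e" unfolding cinv_def using e_idem by blast

lemma pr_corner: "pr f x \<Longrightarrow> e * x = x" "pr f x \<Longrightarrow> x * e = x"
  using pr_basic by auto

lemma cinv_off_circle:
  assumes "cmod r \<noteq> 1"
  shows "cinv e (z - sc r e)"
proof (cases "cmod r < 1")
  case True
  have n: "norm (sc r (st z)) < 1"
  proof -
    have "norm (sc r (st z)) = cmod r * norm (st z)" by (rule norm_sc)
    also have "\<dots> \<le> cmod r * 1" using norm_z(2) by (intro mult_left_mono) simp_all
    finally show ?thesis using True by simp
  qed
  have c1: "cinv e (e - sc r (st z))"
    by (rule neumann[OF e_idem _ _ n]) (simp_all add: sc_mult_left sc_mult_right ezs zse)
  have "cinv e (z * (e - sc r (st z)))"
    by (rule cinv_mult[OF cinv_z c1]) (simp_all add: ze right_diff_distrib e_idem sc_mult_right ezs)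
  moreover have "z * (e - sc r (st z)) = z - sc r e" by (simp add: right_diff_distrib ze sc_mult_right zz2)
  ultimately show ?thesis by simp
next
  case False
  then have r1: "cmod r > 1" using assms by simp
  then have r0: "r \<noteq> 0" by auto
  have n: "norm (sc (1/r) z) < 1"
  proof -
    have "norm (sc (1/r) z) = norm z / cmod r" by (simp add: norm_sc norm_divide)
    also have "\<dots> \<le> 1 / cmod r" using norm_z(1) r1 by (simp add: divide_right_mono)
    also have "\<dots> < 1" using r1 by (simp add: divide_less_eq)
    finally show ?thesis .
  qed
  have c1: "cinv e (e - sc (1/r) z)"
    by (rule neumann[OF e_idem _ _ n]) (simp_all add: sc_mult_left sc_mult_right ez ze)
  have "cinv e (sc (-r) (e - sc (1/r) z))" using r0 by (intro cinv_sc[OF c1]) simp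
  moreover have "sc (-r) (e - sc (1/r) z) = z - sc r e" using r0
    by (simp add: sc_diff_right sc_sc sc_minus_left)
  ultimately show ?thesis by simp
qed

lemma polyE_diff: "polyE z (A - B) = polyE z A - polyE z B"
  using polyE_add[OF ez ze, of "A - B" B] by (simp add: eq_diff_eq)

lemma key_factor:
  assumes "pr f x" "z ^ m * x = polyE z P"
  shows "polyE z (monom \<mu> m - P) = (e * z ^ m) * (sc \<mu> e - x)"
proof -
  have "(e * z ^ m) * (sc \<mu> e - x) = sc \<mu> ((e * z ^ m) * e) - e * (z ^ m * x)"
    by (simp add: right_diff_distrib sc_mult_right mult.assoc)
  also have "\<dots> = sc \<mu> (e * z ^ m) - polyE z P"
    using assms(2) zpow_corner polyE_corner[OF ez ze] by simp
  finally show ?thesis by (simp add: polyE_diff polyE_monom[OF ez ze])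
qed

lemma cinv_on_circle:
  assumes l1: "cmod l = 1" and lX: "l \<notin> X"
  shows "cinv e (z - sc l e)"
proof -
  obtain f x where fx: "pr f x" "cmod (f l) > norm x" using lX l1 unfolding X_def by force
  define \<mu> where "\<mu> = f l"
  have \<mu>0: "\<mu> \<noteq> 0" using fx unfolding \<mu>_def by (metis norm_ge_zero norm_zero not_le)
  have n: "norm (sc (1/\<mu>) x) < 1"
  proof -
    have "norm (sc (1/\<mu>) x) = norm x / cmod \<mu>" by (simp add: norm_sc norm_divide)
    also have "\<dots> < 1" using fx \<mu>0 unfolding \<mu>_def by simp
    finally show ?thesis .
  qed
  have c1: "cinv e (e - sc (1/\<mu>) x)"
    by (rule neumann[OF e_idem _ _ n]) (simp_all add: sc_mult_left sc_mult_right pr_corner[OF fx(1)])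
  have "cinv e (sc \<mu> (e - sc (1/\<mu>) x))" using \<mu>0 by (intro cinv_sc[OF c1])
  moreover have "sc \<mu> (e - sc (1/\<mu>) x) = sc \<mu> e - x" using \<mu>0 by (simp add: sc_diff_right sc_sc)
  ultimately have c2: "cinv e (sc \<mu> e - x)" by simp
  obtain m P where mP: "z ^ m * x = polyE z P" "\<forall>w. w \<noteq> 0 \<longrightarrow> f w * w ^ m = poly P w"
    using pr_rep[OF fx(1)] by blast
  define Q where "Q = monom \<mu> m - P"
  have l0: "l \<noteq> 0" using l1 by auto
  have "poly Q l = 0" unfolding Q_def \<mu>_def using mP(2) l0 by (simp add: poly_monom)
  then obtain R where R: "Q = [:-l, 1:] * R" using poly_eq_0_iff_dvd by (metis dvdE)
  have "polyE z Q = (e * z ^ m) * (sc \<mu> e - x)" unfolding Q_def by (rule key_factor[OF fx(1) mP(1)])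
  moreover have "cinv e ((e * z ^ m) * (sc \<mu> e - x))"
    by (rule cinv_mult[OF cinv_zpow c2]) (simp_all add: zpow_corner right_diff_distrib e_idem sc_mult_right pr_corner[OF fx(1)])
  moreover have "polyE z Q = (z - sc l e) * polyE z R"
    unfolding R by (simp only: polyE_mult[OF ez ze] polyE_linear[OF ez ze])
  ultimately have c3: "cinv e ((z - sc l e) * polyE z R)" by simp
  show ?thesis
  proof (rule cinv_commute_factor[OF c3])
    show "(z - sc l e) * polyE z R = polyE z R * (z - sc l e)"
      by (rule polyE_commute[OF ez ze]) (simp_all add: left_diff_distrib right_diff_distrib sc_mult_left sc_mult_right ez ze)
  qed (simp_all add: left_diff_distrib right_diff_distrib sc_mult_left sc_mult_right ez ze e_idem polyE_corner[OF ez ze])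
qed

lemma cinv_not_X:
  assumes "l \<notin> X"
  shows "cinv e (sc l e - z)"
proof -
  have "cinv e (z - sc l e)"
    using assms cinv_off_circle cinv_on_circle by blast
  then have "cinv e (sc (-1) (z - sc l e))" by (rule cinv_sc) simp
  then show ?thesis by (simp add: sc_minus_left)
qed

lemma X_empty:
  assumes "X = {}"
  shows "e = 0"
proof -
  have "norm z \<le> 0"
    by (rule spectral_bound[OF e_idem ez ze _ order_refl])
       (use zz1 zz2 cinv_not_X assms in auto)
  then have "z = 0" by simp
  then show ?thesis using zz1 by simp
qed

lemma cinv_poly:
  assumes "Q \<noteq> 0" "\<And>r. poly Q r = 0 \<Longrightarrow> cinv e (z - sc r e)"
  shows "cinv e (polyE z Q)"
  using assms
proof (induct "degree Q" arbitrary: Q rule: less_induct)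
  case less
  show ?case
  proof (cases "degree Q = 0")
    case True
    then obtain c where c: "Q = [:c:]" by (metis degree_eq_zeroE)
    then have "c \<noteq> 0" using less by auto
    then show ?thesis unfolding c polyE_const[OF ez ze] by (rule cinv_sc[OF cinv_e])
  next
    case False
    then have "\<not> constant (poly Q)" by (simp add: constant_degree)
    then obtain r where r: "poly Q r = 0" using fundamental_theorem_of_algebra by blast
    then obtain R where R: "Q = [:-r, 1:] * R" using poly_eq_0_iff_dvd by (metis dvdE)
    have R0: "R \<noteq> 0" using less R by auto
    have "degree ([:-r, 1:] * R) = degree [:-r, 1:] + degree R" by (rule degree_mult_eq) (simp_all add: R0)
    moreover have "degree [:-r, 1:] = (1::nat)" by simp
    ultimately have "degree Q = 1 + degree R" using R by (simp only:)
    then have dR: "degree R < degree Q" by simp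
    have "cinv e (polyE z R)"
    proof (rule less(1)[OF dR R0])
      fix s assume "poly R s = 0"
      then have "poly Q s = 0" unfolding R by simp
      then show "cinv e (z - sc s e)" by (rule less(3))
    qed
    then have "cinv e ((z - sc r e) * polyE z R)"
      by (intro cinv_mult[OF less(3)[OF r]])
         (simp_all add: left_diff_distrib ze sc_mult_left e_idem polyE_corner[OF ez ze])
    moreover have "polyE z Q = (z - sc r e) * polyE z R"
      unfolding R by (simp only: polyE_mult[OF ez ze] polyE_linear[OF ez ze])
    ultimately show ?thesis by simp
  qed
qed

lemma spec:
  assumes fx: "pr f x" and \<mu>: "\<mu> \<notin> f ` X"
  shows "cinv e (sc \<mu> e - x)"
proof -
  obtain m P where mP: "z ^ m * x = polyE z P" "\<forall>w. w \<noteq> 0 \<longrightarrow> f w * w ^ m = poly P w"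
    using pr_rep[OF fx] by blast
  define Q where "Q = monom \<mu> m - P"
  have kf: "polyE z Q = (e * z ^ m) * (sc \<mu> e - x)" unfolding Q_def by (rule key_factor[OF fx mP(1)])
  have X0: "l \<in> X \<Longrightarrow> l \<noteq> 0" for l unfolding X_def by auto
  have rootX: "poly Q l = 0 \<Longrightarrow> l \<in> X \<Longrightarrow> False" for l
  proof -
    assume "poly Q l = 0" "l \<in> X"
    then have "\<mu> * l ^ m = f l * l ^ m" using mP(2) X0 unfolding Q_def by (simp add: poly_monom)
    then have "f l = \<mu>" using X0[OF \<open>l \<in> X\<close>] by simp
    then show False using \<mu> \<open>l \<in> X\<close> by auto
  qed
  have yc: "e * (sc \<mu> e - x) = sc \<mu> e - x"
    by (simp add: right_diff_distrib sc_mult_right e_idem pr_corner[OF fx])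
  show ?thesis
  proof (cases "Q = 0")
    case True
    have "X = {}"
    proof (rule ccontr)
      assume "X \<noteq> {}"
      then obtain l where "l \<in> X" by auto
      then show False using rootX[of l] True by simp
    qed
    then have e0: "e = 0" by (rule X_empty)
    then have "x = 0" using pr_corner(1)[OF fx] by simp
    then show ?thesis unfolding cinv_def using e0 by simp
  next
    case False
    have "cinv e (polyE z Q)"
    proof (rule cinv_poly[OF False])
      fix r assume r: "poly Q r = 0"
      show "cinv e (z - sc r e)"
      proof (cases "r \<in> X")
        case True then show ?thesis using rootX r by blast
      next
        case False
        then show ?thesis using cinv_off_circle cinv_on_circle by blast
      qed
    qed
    then have "cinv e ((e * z ^ m) * (sc \<mu> e - x))" using kf by simp
    then show ?thesis by (rule cinv_cancel_left[OF cinv_zpow _ yc]) (simp_all add: zpow_corner)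
  qed
qed

lemma pr_normal: "pr f x \<Longrightarrow> x * st x = st x * x"
  using pr_star pr_comm by blast

lemma iso_le: "pr f x \<Longrightarrow> l \<in> X \<Longrightarrow> cmod (f l) \<le> norm x"
  unfolding X_def by auto

lemma iso_ge:
  assumes fx: "pr f x" and c: "c \<ge> 0" and b: "\<And>l. l \<in> X \<Longrightarrow> cmod (f l) \<le> c"
  shows "norm x \<le> c"
proof (rule spectral_bound[OF e_idem pr_corner[OF fx] pr_normal[OF fx] c])
  fix \<mu> assume "c < cmod \<mu>"
  then have "\<mu> \<notin> f ` X" using b by force
  then show "cinv e (sc \<mu> e - x)" by (rule spec[OF fx])
qed

lemma pr_cont: "pr f x \<Longrightarrow> continuous_on (- {0}) f"
  by (induct rule: pr.induct) (auto intro!: continuous_intros)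

lemma X_sub: "X \<subseteq> sphere 0 1" unfolding X_def by auto

lemma X_compact: "compact X"
proof -
  have eq: "X = sphere 0 1 \<inter> (\<Inter>p\<in>{p. pr (fst p) (snd p)}. sphere 0 1 \<inter> (\<lambda>l. cmod (fst p l)) -` atMost (norm (snd p)))"
    unfolding X_def by auto
  have "closed (sphere (0::complex) 1 \<inter> (\<lambda>l. cmod (fst p l)) -` atMost (norm (snd p)))"
    if "pr (fst p) (snd p)" for p
  proof (rule continuous_closed_preimage)
    have "continuous_on (sphere 0 1) (fst p)"
      by (rule continuous_on_subset[OF pr_cont[OF that]]) auto
    then show "continuous_on (sphere 0 1) (\<lambda>l. cmod (fst p l))" by (intro continuous_intros)
  qed auto
  then have "closed X" unfolding eq by (intro closed_Int closed_INT) auto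
  moreover have "bounded X" using X_sub bounded_subset[OF bounded_sphere] by blast
  ultimately show ?thesis by (simp add: compact_eq_bounded_closed)
qed
end

context unital_cstar_algebra begin

lemma bl_sc: "bounded_linear (sc c)"
  by (rule bounded_linear_intro[where K="cmod c"])
     (simp_all add: sc_add_right sc_of_real[symmetric] sc_sc mult.commute norm_sc)

lemma bl_st: "bounded_linear st"
proof (rule bounded_linear_intro[where K=1])
  fix r x show "st (r *\<^sub>R x) = r *\<^sub>R st x"
    using st_sc[of "complex_of_real r" x] by (simp add: sc_of_real)
qed (simp_all add: st_add)

end

context cu begin

lemma pr_diff: "pr f x \<Longrightarrow> pr g y \<Longrightarrow> pr (\<lambda>w. f w - g w) (x - y)"
proof -
  assume a: "pr f x" "pr g y"
  have "pr (\<lambda>w. f w + (\<lambda>_. -1) w * g w) (x + sc (-1) e * y)"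
    by (rule pr.pr_add[OF a(1) pr.pr_mult[OF pr.pr_const a(2)]])
  moreover have "sc (-1) e * y = - y" using pr_corner[OF a(2)] by (simp add: sc_mult_left sc_minus_left)
  ultimately show ?thesis by simp
qed

lemma pr_scale: "pr f x \<Longrightarrow> pr (\<lambda>w. c * f w) (sc c x)"
proof -
  assume a: "pr f x"
  have "pr (\<lambda>w. (\<lambda>_. c) w * f w) (sc c e * x)" by (rule pr.pr_mult[OF pr.pr_const a])
  then show ?thesis using pr_corner[OF a] by (simp add: sc_mult_left)
qed

lemma pr_lip: "pr f x \<Longrightarrow> pr g y \<Longrightarrow> l \<in> X \<Longrightarrow> cmod (f l - g l) \<le> norm (x - y)"
proof -
  assume a: "pr f x" "pr g y" "l \<in> X"
  from iso_le[OF pr_diff[OF a(1,2)] a(3)] show ?thesis by simp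
qed

definition D :: "'a set" where "D = closure {x. \<exists>f. pr f x}"

lemma pr_D: assumes "pr f x" shows "x \<in> D"
  unfolding D_def by (rule closure_subset[THEN subsetD]) (use assms in blast)

lemma D_seq:
  assumes "x \<in> D"
  obtains F xs where "\<And>k. pr (F k) (xs k)" "xs \<longlonglongrightarrow> x"
proof -
  obtain s where s: "\<And>n. s n \<in> {x. \<exists>f. pr f x}" "s \<longlonglongrightarrow> x"
    using assms unfolding D_def closure_sequential by blast
  then have "\<forall>n. \<exists>f. pr f (s n)" by simp
  from choice[OF this] obtain F where "\<forall>n. pr (F n) (s n)" by (erule exE)
  then show ?thesis by (intro that[of F s] s(2)) simp
qed

lemma D_intro:
  assumes "\<And>k. pr (F k) (xs k)" "xs \<longlonglongrightarrow> x"
  shows "x \<in> D"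
proof -
  have "xs n \<in> {x. \<exists>f. pr f x}" for n
  proof (rule CollectI)
    show "\<exists>f. pr f (xs n)" using assms(1)[of n] by (rule exI[of _ "F n"])
  qed
  then show ?thesis unfolding D_def closure_sequential using assms(2) by (intro exI[of _ xs] conjI allI)
qed

definition chi :: "complex \<Rightarrow> 'a \<Rightarrow> complex" where
  "chi l x = lim (\<lambda>k. fst (SOME p. (\<forall>k. pr (fst p k) (snd p k)) \<and> snd p \<longlonglongrightarrow> x) k l)"

lemma cauchy_pr:
  assumes "\<And>k. pr (F k) (xs k)" "Cauchy xs" "l \<in> X"
  shows "Cauchy (\<lambda>k. F k l)"
proof (rule metric_CauchyI)
  fix \<epsilon> :: real assume "\<epsilon> > 0"
  then obtain M where M: "\<And>m n. m \<ge> M \<Longrightarrow> n \<ge> M \<Longrightarrow> dist (xs m) (xs n) < \<epsilon>"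
    using assms(2) metric_CauchyD by blast
  show "\<exists>M. \<forall>m\<ge>M. \<forall>n\<ge>M. dist (F m l) (F n l) < \<epsilon>"
  proof (intro exI allI impI)
    fix m n assume "m \<ge> M" "n \<ge> M"
    then have "dist (xs m) (xs n) < \<epsilon>" by (rule M)
    moreover have "cmod (F m l - F n l) \<le> norm (xs m - xs n)" by (rule pr_lip[OF assms(1) assms(1) assms(3)])
    ultimately show "dist (F m l) (F n l) < \<epsilon>" by (simp add: dist_norm)
  qed
qed

lemma chi_conv:
  assumes F: "\<And>k. pr (F k) (xs k)" "xs \<longlonglongrightarrow> x" and l: "l \<in> X"
  shows "(\<lambda>k. F k l) \<longlonglongrightarrow> chi l x"
proof -
  define p where "p = (SOME p. (\<forall>k. pr (fst p k) (snd p k)) \<and> snd p \<longlonglongrightarrow> x)"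
  have "\<exists>p. (\<forall>k. pr (fst p k) (snd p k)) \<and> snd p \<longlonglongrightarrow> x"
    by (rule exI[of _ "(F, xs)"]) (simp add: F)
  then have pp: "(\<forall>k. pr (fst p k) (snd p k)) \<and> snd p \<longlonglongrightarrow> x"
    unfolding p_def by (rule someI_ex)
  then have p: "\<And>k. pr (fst p k) (snd p k)" "snd p \<longlonglongrightarrow> x" by simp_all
  have "Cauchy (\<lambda>k. fst p k l)"
    by (rule cauchy_pr[OF p(1) _ l]) (rule LIMSEQ_imp_Cauchy[OF p(2)])
  then have conv: "(\<lambda>k. fst p k l) \<longlonglongrightarrow> chi l x"
    unfolding chi_def p_def[symmetric] using Cauchy_convergent by (simp add: convergent_LIMSEQ_iff)
  have "(\<lambda>k. xs k - snd p k) \<longlonglongrightarrow> x - x" by (intro tendsto_diff F p)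
  then have nz: "(\<lambda>k. norm (xs k - snd p k)) \<longlonglongrightarrow> 0" by (simp add: tendsto_norm_zero)
  have "(\<lambda>k. F k l - fst p k l) \<longlonglongrightarrow> 0"
  proof (rule Lim_null_comparison[OF _ nz])
    show "\<forall>\<^sub>F k in sequentially. norm (F k l - fst p k l) \<le> norm (xs k - snd p k)"
      using pr_lip[OF F(1) p(1) l] by simp
  qed
  from tendsto_add[OF this conv] show ?thesis by simp
qed

lemma chi_pr: assumes "pr f x" "l \<in> X" shows "chi l x = f l"
proof -
  have "(\<lambda>k. f l) \<longlonglongrightarrow> chi l x" by (rule chi_conv[of "\<lambda>_. f" "\<lambda>_. x" x l]) (simp_all add: assms)
  then show ?thesis by (simp add: LIMSEQ_const_iff)
qed

lemma chi_bound:
  assumes "pr f y" "x \<in> D" "l \<in> X"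
  shows "cmod (f l - chi l x) \<le> norm (y - x)"
proof -
  obtain F xs where F: "\<And>k. pr (F k) (xs k)" "xs \<longlonglongrightarrow> x" using D_seq[OF assms(2)] by blast
  have "(\<lambda>k. cmod (f l - F k l)) \<longlonglongrightarrow> cmod (f l - chi l x)"
    by (intro tendsto_intros chi_conv[OF F assms(3)])
  moreover have "(\<lambda>k. norm (y - xs k)) \<longlonglongrightarrow> norm (y - x)" by (intro tendsto_intros F)
  moreover have "\<And>k. cmod (f l - F k l) \<le> norm (y - xs k)" by (rule pr_lip[OF assms(1) F(1) assms(3)])
  ultimately show ?thesis by (intro LIMSEQ_le) auto
qed

end

context cu begin

lemma X_circle: "l \<in> X \<Longrightarrow> cmod l = 1" unfolding X_def by simp

lemma D_add_chi:
  assumes "x \<in> D" "y \<in> D"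
  shows "x + y \<in> D \<and> (\<forall>l\<in>X. chi l (x + y) = chi l x + chi l y)"
proof -
  obtain F xs where F: "\<And>k. pr (F k) (xs k)" "xs \<longlonglongrightarrow> x" using D_seq[OF assms(1)] by blast
  obtain G ys where G: "\<And>k. pr (G k) (ys k)" "ys \<longlonglongrightarrow> y" using D_seq[OF assms(2)] by blast
  have H: "\<And>k. pr (\<lambda>w. F k w + G k w) (xs k + ys k)" by (rule pr.pr_add[OF F(1) G(1)])
  have L: "(\<lambda>k. xs k + ys k) \<longlonglongrightarrow> x + y" by (rule tendsto_add[OF F(2) G(2)])
  show ?thesis
  proof (intro conjI ballI)
    show "x + y \<in> D" by (rule D_intro[OF H L])
    fix l assume l: "l \<in> X"
    have "(\<lambda>k. F k l + G k l) \<longlonglongrightarrow> chi l (x + y)" using chi_conv[OF H L l] by simp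
    moreover have "(\<lambda>k. F k l + G k l) \<longlonglongrightarrow> chi l x + chi l y"
      by (rule tendsto_add[OF chi_conv[OF F l] chi_conv[OF G l]])
    ultimately show "chi l (x + y) = chi l x + chi l y" by (rule LIMSEQ_unique)
  qed
qed

lemma D_mult_chi:
  assumes "x \<in> D" "y \<in> D"
  shows "x * y \<in> D \<and> (\<forall>l\<in>X. chi l (x * y) = chi l x * chi l y)"
proof -
  obtain F xs where F: "\<And>k. pr (F k) (xs k)" "xs \<longlonglongrightarrow> x" using D_seq[OF assms(1)] by blast
  obtain G ys where G: "\<And>k. pr (G k) (ys k)" "ys \<longlonglongrightarrow> y" using D_seq[OF assms(2)] by blast
  have H: "\<And>k. pr (\<lambda>w. F k w * G k w) (xs k * ys k)" by (rule pr.pr_mult[OF F(1) G(1)])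
  have L: "(\<lambda>k. xs k * ys k) \<longlonglongrightarrow> x * y" by (rule tendsto_mult[OF F(2) G(2)])
  show ?thesis
  proof (intro conjI ballI)
    show "x * y \<in> D" by (rule D_intro[OF H L])
    fix l assume l: "l \<in> X"
    have "(\<lambda>k. F k l * G k l) \<longlonglongrightarrow> chi l (x * y)" using chi_conv[OF H L l] by simp
    moreover have "(\<lambda>k. F k l * G k l) \<longlonglongrightarrow> chi l x * chi l y"
      by (rule tendsto_mult[OF chi_conv[OF F l] chi_conv[OF G l]])
    ultimately show "chi l (x * y) = chi l x * chi l y" by (rule LIMSEQ_unique)
  qed
qed

lemma D_sc_chi:
  assumes "x \<in> D"
  shows "sc c x \<in> D \<and> (\<forall>l\<in>X. chi l (sc c x) = c * chi l x)"
proof -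
  obtain F xs where F: "\<And>k. pr (F k) (xs k)" "xs \<longlonglongrightarrow> x" using D_seq[OF assms(1)] by blast
  have H: "\<And>k. pr (\<lambda>w. c * F k w) (sc c (xs k))" by (rule pr_scale[OF F(1)])
  have L: "(\<lambda>k. sc c (xs k)) \<longlonglongrightarrow> sc c x" by (rule bounded_linear.tendsto[OF bl_sc F(2)])
  show ?thesis
  proof (intro conjI ballI)
    show "sc c x \<in> D" by (rule D_intro[OF H L])
    fix l assume l: "l \<in> X"
    have "(\<lambda>k. c * F k l) \<longlonglongrightarrow> chi l (sc c x)" using chi_conv[OF H L l] by simp
    moreover have "(\<lambda>k. c * F k l) \<longlonglongrightarrow> c * chi l x"
      by (rule tendsto_mult[OF tendsto_const chi_conv[OF F l]])
    ultimately show "chi l (sc c x) = c * chi l x" by (rule LIMSEQ_unique)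
  qed
qed

lemma D_st_chi:
  assumes "x \<in> D"
  shows "st x \<in> D \<and> (\<forall>l\<in>X. chi l (st x) = cnj (chi l x))"
proof -
  obtain F xs where F: "\<And>k. pr (F k) (xs k)" "xs \<longlonglongrightarrow> x" using D_seq[OF assms(1)] by blast
  have "\<forall>k. \<exists>g. pr g (st (xs k)) \<and> (\<forall>w. cmod w = 1 \<longrightarrow> g w = cnj (F k w))"
    using pr_star[OF F(1)] by simp
  from choice[OF this] obtain G where G: "\<forall>k. pr (G k) (st (xs k)) \<and> (\<forall>w. cmod w = 1 \<longrightarrow> G k w = cnj (F k w))"
    by (erule exE)
  have H: "\<And>k. pr (G k) (st (xs k))" using G by simp
  have L: "(\<lambda>k. st (xs k)) \<longlonglongrightarrow> st x" by (rule bounded_linear.tendsto[OF bl_st F(2)])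
  show ?thesis
  proof (intro conjI ballI)
    show "st x \<in> D" by (rule D_intro[OF H L])
    fix l assume l: "l \<in> X"
    have "(\<lambda>k. G k l) \<longlonglongrightarrow> chi l (st x)" by (rule chi_conv[OF H L l])
    moreover have "(\<lambda>k. G k l) = (\<lambda>k. cnj (F k l))" using G X_circle[OF l] by simp
    moreover have "(\<lambda>k. cnj (F k l)) \<longlonglongrightarrow> cnj (chi l x)"
      by (rule tendsto_cnj[OF chi_conv[OF F l]])
    ultimately show "chi l (st x) = cnj (chi l x)" using LIMSEQ_unique by metis
  qed
qed

lemma D_closed: "closed D" unfolding D_def by simp

lemma D_corner:
  assumes "x \<in> D"
  shows "e * x = x" "x * e = x"
proof -
  obtain F xs where F: "\<And>k. pr (F k) (xs k)" "xs \<longlonglongrightarrow> x" using D_seq[OF assms(1)] by blast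
  have "(\<lambda>k. e * xs k) \<longlonglongrightarrow> e * x" by (rule tendsto_mult[OF tendsto_const F(2)])
  moreover have "(\<lambda>k. e * xs k) = xs" using pr_corner(1)[OF F(1)] by simp
  ultimately show "e * x = x" using F(2) LIMSEQ_unique by metis
  have "(\<lambda>k. xs k * e) \<longlonglongrightarrow> x * e" by (rule tendsto_mult[OF F(2) tendsto_const])
  moreover have "(\<lambda>k. xs k * e) = xs" using pr_corner(2)[OF F(1)] by simp
  ultimately show "x * e = x" using F(2) LIMSEQ_unique by metis
qed

lemma e_D: "e \<in> D" using pr_D[OF pr_const[of 1]] by simp
lemma z_D: "z \<in> D" by (rule pr_D[OF pr_id])
lemma zero_D: "0 \<in> D" using pr_D[OF pr_const[of 0]] by simp

lemma chi_cont:
  assumes "x \<in> D"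
  shows "continuous_on X (\<lambda>l. chi l x)"
proof -
  obtain F xs where F: "\<And>k. pr (F k) (xs k)" "xs \<longlonglongrightarrow> x" using D_seq[OF assms(1)] by blast
  have X0: "X \<subseteq> - {0}" using X_circle by force
  have "uniform_limit X F (\<lambda>l. chi l x) sequentially"
  proof (rule uniform_limitI)
    fix \<epsilon> :: real assume "\<epsilon> > 0"
    then have "\<forall>\<^sub>F k in sequentially. dist (xs k) x < \<epsilon>" using F(2) tendsto_iff by blast
    then show "\<forall>\<^sub>F k in sequentially. \<forall>l\<in>X. dist (F k l) (chi l x) < \<epsilon>"
    proof (rule eventually_mono)
      fix k assume k: "dist (xs k) x < \<epsilon>"
      show "\<forall>l\<in>X. dist (F k l) (chi l x) < \<epsilon>"
      proof
        fix l assume "l \<in> X"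
        then have "cmod (F k l - chi l x) \<le> norm (xs k - x)" by (rule chi_bound[OF F(1) assms])
        then show "dist (F k l) (chi l x) < \<epsilon>" using k by (simp add: dist_norm)
      qed
    qed
  qed
  moreover have "\<forall>\<^sub>F k in sequentially. continuous_on X (F k)"
    using continuous_on_subset[OF pr_cont[OF F(1)] X0] by simp
  ultimately show ?thesis using uniform_limit_theorem by (metis trivial_limit_sequentially)
qed

lemma chi_inj:
  assumes "x \<in> D" "\<And>l. l \<in> X \<Longrightarrow> chi l x = 0"
  shows "x = 0"
proof -
  obtain F xs where F: "\<And>k. pr (F k) (xs k)" "xs \<longlonglongrightarrow> x" using D_seq[OF assms(1)] by blast
  have b: "norm (xs k) \<le> norm (xs k - x)" for k
  proof (rule iso_ge[OF F(1)])
    fix l assume l: "l \<in> X"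
    show "cmod (F k l) \<le> norm (xs k - x)" using chi_bound[OF F(1) assms(1) l] assms(2)[OF l] by simp
  qed simp
  have "(\<lambda>k. xs k - x) \<longlonglongrightarrow> x - x" by (intro tendsto_diff F tendsto_const)
  then have "(\<lambda>k. norm (xs k - x)) \<longlonglongrightarrow> 0" by (simp add: tendsto_norm_zero)
  then have "xs \<longlonglongrightarrow> 0" by (rule Lim_null_comparison[rotated]) (simp add: b)
  then show ?thesis using F(2) LIMSEQ_unique by metis
qed

end

context cu begin

lemma rpf_pr:
  fixes h :: "complex \<Rightarrow> real"
  assumes "real_polynomial_function h"
  shows "\<exists>g y. pr g y \<and> (\<forall>w. cmod w = 1 \<longrightarrow> g w = complex_of_real (h w))"
  using assms
proof (induct rule: real_polynomial_function.induct)
  case (linear h)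
  define a where "a = (complex_of_real (h 1) - \<i> * complex_of_real (h \<i>)) / 2"
  define b where "b = (complex_of_real (h 1) + \<i> * complex_of_real (h \<i>)) / 2"
  have p: "pr (\<lambda>w. a * w + b * inverse w) (sc a e * z + sc b e * st z)"
    by (rule pr.pr_add[OF pr.pr_mult[OF pr_const pr_id] pr.pr_mult[OF pr_const pr_inv]])
  have "a * w + b * inverse w = complex_of_real (h w)" if "cmod w = 1" for w
  proof -
    have lin: "linear h" using linear by (rule bounded_linear.linear)
    have "w = Re w *\<^sub>R 1 + Im w *\<^sub>R \<i>" by (simp add: complex_eq_iff)
    then have "h w = h (Re w *\<^sub>R 1 + Im w *\<^sub>R \<i>)" by simp
    also have "\<dots> = Re w * h 1 + Im w * h \<i>" using lin by (simp add: linear_add linear_cmul)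
    finally have hw: "h w = Re w * h 1 + Im w * h \<i>" .
    show ?thesis using inverse_circle[OF that] unfolding hw a_def b_def
      by (simp add: complex_eq_iff algebra_simps) (simp add: add_divide_distrib[symmetric])
  qed
  then show ?case by (intro exI[of _ "\<lambda>w. a * w + b * inverse w"] exI[of _ "sc a e * z + sc b e * st z"] conjI p) simp
next
  case (const c)
  show ?case by (intro exI[of _ "\<lambda>_. complex_of_real c"] exI[of _ "sc (complex_of_real c) e"] conjI pr_const) simp
next
  case (add f g)
  then obtain f' x g' y where "pr f' x" "\<forall>w. cmod w = 1 \<longrightarrow> f' w = complex_of_real (f w)"
    "pr g' y" "\<forall>w. cmod w = 1 \<longrightarrow> g' w = complex_of_real (g w)" by blast
  then show ?case by (intro exI[of _ "\<lambda>w. f' w + g' w"] exI[of _ "x + y"]) (simp add: pr.pr_add)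
next
  case (mult f g)
  then obtain f' x g' y where "pr f' x" "\<forall>w. cmod w = 1 \<longrightarrow> f' w = complex_of_real (f w)"
    "pr g' y" "\<forall>w. cmod w = 1 \<longrightarrow> g' w = complex_of_real (g w)" by blast
  then show ?case by (intro exI[of _ "\<lambda>w. f' w * g' w"] exI[of _ "x * y"]) (simp add: pr.pr_mult)
qed

lemma pf_pr:
  fixes g :: "complex \<Rightarrow> complex"
  assumes "polynomial_function g"
  shows "\<exists>g' y. pr g' y \<and> (\<forall>w. cmod w = 1 \<longrightarrow> g' w = g w)"
proof -
  have r1: "real_polynomial_function (Re \<circ> g)" and r2: "real_polynomial_function (Im \<circ> g)"
    using assms unfolding polynomial_function_def by (simp_all add: bounded_linear_Re bounded_linear_Im)
  obtain g1 y1 where a1: "pr g1 y1" and a2: "\<forall>w. cmod w = 1 \<longrightarrow> g1 w = complex_of_real ((Re \<circ> g) w)"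
    using rpf_pr[OF r1] by (elim exE conjE)
  obtain g2 y2 where a3: "pr g2 y2" and a4: "\<forall>w. cmod w = 1 \<longrightarrow> g2 w = complex_of_real ((Im \<circ> g) w)"
    using rpf_pr[OF r2] by (elim exE conjE)
  have "pr (\<lambda>w. g1 w + \<i> * g2 w) (y1 + sc \<i> y2)" by (rule pr.pr_add[OF a1 pr_scale[OF a3]])
  moreover have "\<forall>w. cmod w = 1 \<longrightarrow> g1 w + \<i> * g2 w = g w"
    using a2 a4 by (simp add: complex_eq_iff)
  ultimately show ?thesis by (intro exI[of _ "\<lambda>w. g1 w + \<i> * g2 w"] exI[of _ "y1 + sc \<i> y2"] conjI)
qed

lemma approx:
  assumes "continuous_on X f" "\<epsilon> > 0"
  shows "\<exists>g y. pr g y \<and> (\<forall>l\<in>X. cmod (f l - g l) < \<epsilon>)"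
proof -
  obtain p where p: "polynomial_function p" "\<forall>l\<in>X. norm (f l - p l) < \<epsilon>"
    using Stone_Weierstrass_polynomial_function[OF X_compact assms] by blast
  obtain g y where "pr g y" "\<forall>w. cmod w = 1 \<longrightarrow> g w = p w" using pf_pr[OF p(1)] by blast
  then show ?thesis using p(2) X_circle by (intro exI[of _ g] exI[of _ y]) simp
qed

lemma chi_surj:
  assumes f: "continuous_on X f"
  shows "\<exists>x\<in>D. \<forall>l\<in>X. chi l x = f l"
proof -
  have "\<forall>k. \<exists>p. pr (fst p) (snd p) \<and> (\<forall>l\<in>X. cmod (f l - fst p l) < inverse (real (Suc k)))"
  proof
    fix k
    obtain g y where "pr g y" "\<forall>l\<in>X. cmod (f l - g l) < inverse (real (Suc k))"
      using approx[OF f, of "inverse (real (Suc k))"] by auto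
    then show "\<exists>p. pr (fst p) (snd p) \<and> (\<forall>l\<in>X. cmod (f l - fst p l) < inverse (real (Suc k)))"
      by (intro exI[of _ "(g, y)"]) simp
  qed
  from choice[OF this] obtain p where p: "\<forall>k. pr (fst (p k)) (snd (p k)) \<and> (\<forall>l\<in>X. cmod (f l - fst (p k) l) < inverse (real (Suc k)))"
    by (erule exE)
  define G where "G k = fst (p k)" for k
  define ys where "ys k = snd (p k)" for k
  have G: "\<And>k. pr (G k) (ys k)" "\<And>k l. l \<in> X \<Longrightarrow> cmod (f l - G k l) < inverse (real (Suc k))"
    using p unfolding G_def ys_def by auto
  have dist_ys: "norm (ys m - ys n) \<le> inverse (real (Suc m)) + inverse (real (Suc n))" for m n
  proof (rule iso_ge[OF pr_diff[OF G(1) G(1)]])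
    fix l assume l: "l \<in> X"
    have "cmod (G m l - G n l) \<le> cmod (f l - G m l) + cmod (f l - G n l)"
    proof -
      have "G m l - G n l = (f l - G n l) - (f l - G m l)" by simp
      then show ?thesis using norm_triangle_ineq4[of "f l - G n l" "f l - G m l"] by simp
    qed
    also have "\<dots> \<le> inverse (real (Suc m)) + inverse (real (Suc n))"
      using G(2)[OF l, of m] G(2)[OF l, of n] by simp
    finally show "cmod (G m l - G n l) \<le> inverse (real (Suc m)) + inverse (real (Suc n))" .
  qed simp
  have "Cauchy ys"
  proof (rule metric_CauchyI)
    fix \<epsilon> :: real assume \<epsilon>: "\<epsilon> > 0"
    obtain M :: nat where M: "2 / \<epsilon> < real M" using reals_Archimedean2 by blast
    have iM: "inverse (real (Suc k)) < \<epsilon> / 2" if "k \<ge> M" for k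
    proof -
      have "2 / \<epsilon> < real (Suc k)" using M that by simp
      then have "2 < \<epsilon> * real (Suc k)" using \<epsilon> by (simp add: divide_less_eq mult.commute)
      then show ?thesis using \<epsilon> by (simp add: inverse_eq_divide field_simps)
    qed
    show "\<exists>M. \<forall>m\<ge>M. \<forall>n\<ge>M. dist (ys m) (ys n) < \<epsilon>"
    proof (intro exI allI impI)
      fix m n assume "m \<ge> M" "n \<ge> M"
      then have "inverse (real (Suc m)) + inverse (real (Suc n)) < \<epsilon>" using iM[of m] iM[of n] by linarith
      then show "dist (ys m) (ys n) < \<epsilon>" using dist_ys[of m n] by (simp add: dist_norm)
    qed
  qed
  then obtain x where x: "ys \<longlonglongrightarrow> x" using Cauchy_convergent convergent_def by blast
  have xD: "x \<in> D" by (rule D_intro[OF G(1) x])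
  show ?thesis
  proof (intro bexI[OF _ xD] ballI)
    fix l assume l: "l \<in> X"
    have 1: "(\<lambda>k. G k l) \<longlonglongrightarrow> chi l x" by (rule chi_conv[OF G(1) x l])
    have "(\<lambda>k. G k l - f l) \<longlonglongrightarrow> 0"
    proof (rule Lim_null_comparison[OF _ LIMSEQ_inverse_real_of_nat])
      show "\<forall>\<^sub>F k in sequentially. norm (G k l - f l) \<le> inverse (real (Suc k))"
        using G(2)[OF l] by (simp add: norm_minus_commute less_imp_le)
    qed
    then have "(\<lambda>k. G k l - f l + f l) \<longlonglongrightarrow> 0 + f l" by (intro tendsto_add tendsto_const)
    then have "(\<lambda>k. G k l) \<longlonglongrightarrow> f l" by simp
    then show "chi l x = f l" using 1 LIMSEQ_unique by metis
  qed
qed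

end

context cu begin
lemma D_min:
  assumes "closed B" "star_subalgebra sc st B" "e \<in> B" "z \<in> B"
  shows "D \<subseteq> B"
proof -
  have sB: "\<forall>c. \<forall>x\<in>B. sc c x \<in> B" "\<forall>x\<in>B. \<forall>y\<in>B. x + y \<in> B \<and> x * y \<in> B" "\<forall>x\<in>B. st x \<in> B"
    using assms(2) unfolding star_subalgebra_def by auto
  have "pr f x \<Longrightarrow> x \<in> B" for f x
    by (induct rule: pr.induct) (use sB assms(3,4) in auto)
  then have "{x. \<exists>f. pr f x} \<subseteq> B" by auto
  then show ?thesis unfolding D_def by (rule closure_minimal[OF _ assms(1)])
qed
end

locale mainloc = unital_cstar_algebra sc st
  for sc :: "complex \<Rightarrow> 'a::{banach, real_normed_algebra_1} \<Rightarrow> 'a" and st +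
  fixes ee :: "nat \<Rightarrow> 'a" and u :: 'a and n :: nat
  assumes n1: "n \<ge> 1"
    and proj: "\<And>i. i \<in> {1..n} \<Longrightarrow> projection st (ee i)"
    and orth: "\<And>i j. i \<in> {1..n} \<Longrightarrow> j \<in> {1..n} \<Longrightarrow> i \<noteq> j \<Longrightarrow> ee i * ee j = 0"
    and unit: "unitary st u"
    and rot: "\<And>i. i \<in> {1..n} \<Longrightarrow> st u * ee i * u = ee (if i = n then 1 else i + 1)"
begin

definition Ep :: "nat \<Rightarrow> 'a" where "Ep i = ee (i mod n + 1)"

lemma Ep_range: "i mod n + 1 \<in> {1..n}" using n1 by (simp add: Suc_leI)

lemma Ep_st: "st (Ep i) = Ep i" and Ep_idem: "Ep i * Ep i = Ep i"
  using proj[OF Ep_range[of i]] unfolding Ep_def projection_def by auto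

lemma Ep_orth: "i mod n \<noteq> j mod n \<Longrightarrow> Ep i * Ep j = 0"
  unfolding Ep_def by (rule orth[OF Ep_range Ep_range]) simp

lemma Ep_idem2: "Ep i * (Ep i * x) = Ep i * x" by (simp add: mult.assoc[symmetric] Ep_idem)

lemma Ep_orth2: "i mod n \<noteq> j mod n \<Longrightarrow> Ep i * (Ep j * x) = 0"
  by (simp add: mult.assoc[symmetric] Ep_orth)

lemma Ep_mod: "Ep (i mod n) = Ep i" unfolding Ep_def by simp

lemma Ep_n: "Ep n = Ep 0" unfolding Ep_def by simp

lemma uu: "st u * u = 1" "u * st u = 1" using unit unfolding unitary_def by auto

lemma Ep_u: "Ep i * u = u * Ep (Suc i)"
proof -
  have "st u * Ep i * u = Ep (Suc i)"
  proof -
    have "st u * Ep i * u = ee (if i mod n + 1 = n then 1 else i mod n + 1 + 1)"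
      unfolding Ep_def by (rule rot[OF Ep_range])
    also have "\<dots> = Ep (Suc i)" unfolding Ep_def using n1 by (simp add: mod_Suc)
    finally show ?thesis .
  qed
  then have "u * (st u * Ep i * u) = u * Ep (Suc i)" by simp
  then show ?thesis by (simp add: mult.assoc[symmetric] uu)
qed

lemma Ep_upow: "Ep i * u ^ k = u ^ k * Ep (i + k)"
proof (induct k arbitrary: i)
  case (Suc k)
  have "Ep i * u ^ Suc k = (Ep i * u) * u ^ k" by (simp add: mult.assoc)
  also have "\<dots> = u * (Ep (Suc i) * u ^ k)" by (simp add: Ep_u mult.assoc)
  also have "\<dots> = u ^ Suc k * Ep (i + Suc k)" using Suc[of "Suc i"] by (simp add: mult.assoc)
  finally show ?case .
qed simp

lemma st_upow: "st (u ^ k) = st u ^ k" by (rule st_power)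

lemma upow_inv: "u ^ k * st u ^ k = 1" "st u ^ k * u ^ k = 1"
proof -
  show "u ^ k * st u ^ k = 1"
  proof (induct k)
    case (Suc k)
    have "u ^ Suc k * st u ^ Suc k = u ^ k * (u * st u) * st u ^ k"
      by (simp only: power_Suc2[of u k] power_Suc[of "st u" k] mult.assoc)
    then show ?case using Suc uu by simp
  qed simp
  show "st u ^ k * u ^ k = 1"
  proof (induct k)
    case (Suc k)
    have "st u ^ Suc k * u ^ Suc k = st u ^ k * (st u * u) * u ^ k"
      by (simp only: power_Suc2[of "st u" k] power_Suc[of u k] mult.assoc)
    then show ?case using Suc uu by simp
  qed simp
qed

lemma upow_inv2: "u ^ k * (st u ^ k * x) = x" "st u ^ k * (u ^ k * x) = x"
  by (simp_all add: mult.assoc[symmetric] upow_inv)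

definition Rm :: "nat \<Rightarrow> 'a" where "Rm j = u ^ j * Ep j"

lemma Rm_alt: "Rm j = Ep 0 * u ^ j" unfolding Rm_def using Ep_upow[of 0 j] by simp

lemma st_Rm: "st (Rm j) = Ep j * st u ^ j" unfolding Rm_def by (simp add: st_mult st_upow Ep_st)

lemma Rm_stRm: "j < n \<Longrightarrow> k < n \<Longrightarrow> Rm j * st (Rm k) = (if j = k then Ep 0 else 0)"
proof -
  assume jk: "j < n" "k < n"
  have "Rm j * st (Rm k) = u ^ j * (Ep j * Ep k) * st u ^ k" unfolding st_Rm unfolding Rm_def by (simp add: mult.assoc)
  moreover have "j \<noteq> k \<Longrightarrow> Ep j * Ep k = 0" using jk by (intro Ep_orth) simp
  moreover have "u ^ j * Ep j * st u ^ j = Ep 0"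
    using Rm_alt[of j] unfolding Rm_def by (simp add: mult.assoc upow_inv)
  ultimately show ?thesis by (cases "j = k") (simp_all add: Ep_idem)
qed

lemma stRm_Rm: "st (Rm j) * Rm j = Ep j"
  unfolding st_Rm unfolding Rm_def by (simp add: mult.assoc upow_inv2 Ep_idem)

lemma Rm_Ep: "k < n \<Longrightarrow> j < n \<Longrightarrow> Rm j * Ep k = (if j = k then Rm j else 0)"
  unfolding Rm_def using Ep_orth[of j k] by (simp add: mult.assoc Ep_idem)

lemma Ep_stRm: "k < n \<Longrightarrow> j < n \<Longrightarrow> Ep k * st (Rm j) = (if j = k then st (Rm j) else 0)"
proof -
  assume "k < n" "j < n"
  then have "st (Rm j * Ep k) = st (if j = k then Rm j else 0)" using Rm_Ep by simp
  then show ?thesis by (simp add: st_mult Ep_st split: if_splits)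
qed

lemma Ep0_Rm: "Ep 0 * Rm j = Rm j" unfolding Rm_alt by (simp add: mult.assoc[symmetric] Ep_idem)
lemma stRm_Ep0: "st (Rm j) * Ep 0 = st (Rm j)"
  using arg_cong[OF Ep0_Rm[of j], of st] by (simp add: st_mult Ep_st)

definition pp :: 'a where "pp = (\<Sum>j<n. Ep j)"

lemma pp_sum: "pp = (\<Sum>i=1..n. ee i)"
proof -
  have "(\<Sum>i=1..n. ee i) = (\<Sum>i=Suc 0..Suc (n-1). ee i)" using n1 by simp
  also have "\<dots> = (\<Sum>j=0..n-1. ee (Suc j))" by (rule sum.shift_bounds_cl_Suc_ivl)
  also have "{0..n-1} = {..<n}" using n1 by auto
  finally have "(\<Sum>i=1..n. ee i) = (\<Sum>j<n. ee (Suc j))" .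
  also have "\<dots> = (\<Sum>j<n. Ep j)" unfolding Ep_def by (intro sum.cong) auto
  finally show ?thesis unfolding pp_def by simp
qed

lemma pp_Rm: "(\<Sum>j<n. st (Rm j) * Rm j) = pp" unfolding pp_def by (simp add: stRm_Rm)

lemma Rm_pp: "j < n \<Longrightarrow> Rm j * pp = Rm j"
  unfolding pp_def by (simp add: sum_distrib_left Rm_Ep)

lemma pp_stRm: "j < n \<Longrightarrow> pp * st (Rm j) = st (Rm j)"
  unfolding pp_def by (simp add: sum_distrib_right Ep_stRm)

lemma st_pp: "st pp = pp" unfolding pp_def by (simp add: st_sum Ep_st)

lemma Ep_pp: "j < n \<Longrightarrow> Ep j * pp = Ep j"
proof -
  assume j: "j < n"
  have "Ep j * pp = (\<Sum>k<n. if k = j then Ep j else 0)"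
    unfolding pp_def sum_distrib_left using j by (intro sum.cong) (auto simp: Ep_idem Ep_orth)
  then show ?thesis using j by simp
qed

lemma pp_idem: "pp * pp = pp"
proof -
  have "pp * pp = (\<Sum>j<n. Ep j * pp)" by (subst (1) pp_def) (simp add: sum_distrib_right)
  also have "\<dots> = (\<Sum>j<n. Ep j)" by (simp add: Ep_pp)
  finally show ?thesis unfolding pp_def[symmetric] .
qed

definition zz :: 'a where "zz = u ^ n * Ep 0"

sublocale C: cu sc st "Ep 0" zz
proof
  show "st (Ep 0) = Ep 0" by (rule Ep_st)
  show "Ep 0 * Ep 0 = Ep 0" by (rule Ep_idem)
  have c: "Ep 0 * u ^ n = u ^ n * Ep 0" using Ep_upow[of 0 n] Ep_n by simp
  show "Ep 0 * zz = zz" unfolding zz_def by (simp add: mult.assoc[symmetric] c) (simp add: mult.assoc Ep_idem)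
  show "zz * Ep 0 = zz" unfolding zz_def by (simp add: mult.assoc Ep_idem)
  show "st zz * zz = Ep 0" unfolding zz_def
    by (simp add: st_mult st_upow Ep_st mult.assoc) (simp add: mult.assoc[symmetric] upow_inv Ep_idem)
  have "zz * st zz = u ^ n * (Ep 0 * Ep 0) * st u ^ n" unfolding zz_def
    by (simp add: st_mult st_upow Ep_st mult.assoc)
  also have "\<dots> = (Ep 0 * u ^ n) * st u ^ n" by (simp add: Ep_idem c)
  also have "\<dots> = Ep 0" by (simp add: mult.assoc upow_inv)
  finally show "zz * st zz = Ep 0" .
qed

end

lemma subalg_sum:
  assumes "star_subalgebra sc st B" "finite K" "\<And>k. k \<in> K \<Longrightarrow> f k \<in> B"
  shows "sum f K \<in> B"
  using assms(2,3)
proof (induct K rule: finite_induct)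
  case empty then show ?case using assms(1) unfolding star_subalgebra_def by simp
next
  case (insert k K) then show ?case using assms(1) unfolding star_subalgebra_def by simp
qed

context mainloc begin

lemma pp_Ep: "k < n \<Longrightarrow> pp * Ep k = Ep k"
  using arg_cong[OF Ep_pp[of k], of st] by (simp add: st_mult st_pp Ep_st)

lemma Rm_u: "Rm i * u = u ^ Suc i * Ep (Suc i)"
  unfolding Rm_def by (simp add: mult.assoc Ep_u) (simp add: mult.assoc[symmetric] power_Suc2[symmetric] del: power_Suc2)

lemma Rm_u_lt: "Suc i < n \<Longrightarrow> Rm i * u = Rm (Suc i)"
  unfolding Rm_u by (simp add: Rm_def)

lemma Rm_u_n: "Suc i = n \<Longrightarrow> Rm i * u = zz"
  unfolding Rm_u zz_def using Ep_n by simp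

lemma zz_stRm: "j < n \<Longrightarrow> zz * st (Rm j) = (if j = 0 then zz else 0)"
proof -
  assume j: "j < n"
  have "zz * st (Rm j) = u ^ n * (Ep 0 * (Ep j * st u ^ j))" unfolding zz_def st_Rm by (simp add: mult.assoc)
  then show ?thesis using j by (cases "j = 0") (simp_all add: Ep_idem Ep_idem2 Ep_orth2 zz_def)
qed

definition S :: "'a set" where
  "S = ee ` {1..n} \<union> (\<lambda>i. ee i * u * ee (i + 1)) ` {1..n-1} \<union> {pp * u * pp}"

definition Bp :: "'a set" where
  "Bp = {x. pp * x * pp = x \<and> (\<forall>i<n. \<forall>j<n. Rm i * x * st (Rm j) \<in> C.D)}"

lemma ee_Ep: "i \<in> {1..n} \<Longrightarrow> ee i = Ep (i - 1)"
proof -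
  assume i: "i \<in> {1..n}"
  then have "i - 1 < n" by auto
  then have "(i - 1) mod n + 1 = i" using i by simp
  then show ?thesis unfolding Ep_def by simp
qed

lemma D_sum:
  assumes "finite K" "\<And>k. k \<in> K \<Longrightarrow> f k \<in> C.D"
  shows "sum f K \<in> C.D \<and> (\<forall>l\<in>C.X. C.chi l (sum f K) = (\<Sum>k\<in>K. C.chi l (f k)))"
  using assms
proof (induct K rule: finite_induct)
  case empty
  have "C.chi l 0 = 0" if "l \<in> C.X" for l using C.chi_pr[OF C.pr_const[of 0] that] by simp
  then show ?case using C.zero_D by simp
next
  case (insert k K)
  then have a: "f k \<in> C.D" "sum f K \<in> C.D" "\<forall>l\<in>C.X. C.chi l (sum f K) = (\<Sum>k\<in>K. C.chi l (f k))" by auto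
  show ?case using C.D_add_chi[OF a(1,2)] a(3) insert(1,2) by simp
qed

lemma decomp:
  assumes "pp * x * pp = x"
  shows "x = (\<Sum>i<n. \<Sum>j<n. st (Rm i) * (Rm i * x * st (Rm j)) * Rm j)"
proof -
  have "x = pp * x * pp" using assms by simp
  also have "\<dots> = (\<Sum>i<n. st (Rm i) * Rm i) * x * (\<Sum>j<n. st (Rm j) * Rm j)" by (simp add: pp_Rm)
  also have "\<dots> = (\<Sum>i<n. \<Sum>j<n. st (Rm i) * (Rm i * x * st (Rm j)) * Rm j)"
    by (simp add: sum_distrib_right) (simp add: sum_distrib_left mult.assoc)
  finally show ?thesis .
qed

lemma Bp_pp: "x \<in> Bp \<Longrightarrow> pp * x = x" "x \<in> Bp \<Longrightarrow> x * pp = x"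
proof -
  assume "x \<in> Bp"
  then have x: "pp * x * pp = x" unfolding Bp_def by simp
  have "pp * x = pp * (pp * x * pp)" using x by simp
  also have "\<dots> = pp * x * pp" by (simp add: mult.assoc[symmetric] pp_idem)
  finally show "pp * x = x" using x by simp
  have "x * pp = (pp * x * pp) * pp" using x by simp
  also have "\<dots> = pp * x * pp" by (simp add: mult.assoc pp_idem)
  finally show "x * pp = x" using x by simp
qed

lemma mult_split:
  assumes "x \<in> Bp" "i < n" "j < n"
  shows "Rm i * (x * y) * st (Rm j) = (\<Sum>k<n. (Rm i * x * st (Rm k)) * (Rm k * y * st (Rm j)))"
proof -
  have "Rm i * (x * y) * st (Rm j) = Rm i * x * pp * y * st (Rm j)"
    using Bp_pp(2)[OF assms(1)] by (simp add: mult.assoc)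
  also have "\<dots> = Rm i * x * (\<Sum>k<n. st (Rm k) * Rm k) * y * st (Rm j)" by (simp add: pp_Rm)
  also have "\<dots> = (\<Sum>k<n. (Rm i * x * st (Rm k)) * (Rm k * y * st (Rm j)))"
    by (simp add: sum_distrib_left sum_distrib_right mult.assoc)
  finally show ?thesis .
qed

lemma Bp_sub: "star_subalgebra sc st Bp"
  unfolding star_subalgebra_def
proof (intro conjI ballI allI)
  show "0 \<in> Bp" unfolding Bp_def using C.zero_D by simp
next
  fix x y assume x: "x \<in> Bp" and y: "y \<in> Bp"
  then have x1: "pp * x * pp = x" "\<And>i j. i < n \<Longrightarrow> j < n \<Longrightarrow> Rm i * x * st (Rm j) \<in> C.D"
    and y1: "pp * y * pp = y" "\<And>i j. i < n \<Longrightarrow> j < n \<Longrightarrow> Rm i * y * st (Rm j) \<in> C.D"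
    unfolding Bp_def by auto
  show "x + y \<in> Bp" unfolding Bp_def
  proof (intro CollectI conjI allI impI)
    show "pp * (x + y) * pp = x + y" using x1 y1 by (simp add: distrib_left distrib_right)
    fix i j assume "i < n" "j < n"
    then show "Rm i * (x + y) * st (Rm j) \<in> C.D"
      using C.D_add_chi[OF x1(2) y1(2)] by (simp add: distrib_left distrib_right)
  qed
  show "x * y \<in> Bp" unfolding Bp_def
  proof (intro CollectI conjI allI impI)
    show "pp * (x * y) * pp = x * y" using Bp_pp[OF x] Bp_pp[OF y] by (simp add: mult.assoc[symmetric])
        (metis mult.assoc)
    fix i j assume ij: "i < n" "j < n"
    have "(\<Sum>k<n. (Rm i * x * st (Rm k)) * (Rm k * y * st (Rm j))) \<in> C.D"
      using D_sum[of "{..<n}" "\<lambda>k. (Rm i * x * st (Rm k)) * (Rm k * y * st (Rm j))"]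
        C.D_mult_chi[OF x1(2) y1(2)] ij by auto
    then show "Rm i * (x * y) * st (Rm j) \<in> C.D" using mult_split[OF x ij] by simp
  qed
next
  fix c x assume x: "x \<in> Bp"
  then have x1: "pp * x * pp = x" "\<And>i j. i < n \<Longrightarrow> j < n \<Longrightarrow> Rm i * x * st (Rm j) \<in> C.D"
    unfolding Bp_def by auto
  show "sc c x \<in> Bp" unfolding Bp_def
  proof (intro CollectI conjI allI impI)
    show "pp * sc c x * pp = sc c x" using x1 by (simp add: sc_mult_left sc_mult_right)
    fix i j assume "i < n" "j < n"
    then show "Rm i * sc c x * st (Rm j) \<in> C.D"
      using C.D_sc_chi[OF x1(2)] by (simp add: sc_mult_left sc_mult_right)
  qed
next
  fix x assume x: "x \<in> Bp"
  then have x1: "pp * x * pp = x" "\<And>i j. i < n \<Longrightarrow> j < n \<Longrightarrow> Rm i * x * st (Rm j) \<in> C.D"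
    unfolding Bp_def by auto
  show "st x \<in> Bp" unfolding Bp_def
  proof (intro CollectI conjI allI impI)
    have "st (pp * x * pp) = st x" using x1 by simp
    then show "pp * st x * pp = st x" by (simp add: st_mult st_pp mult.assoc)
    fix i j assume "i < n" "j < n"
    then have "st (Rm j * x * st (Rm i)) \<in> C.D" using C.D_st_chi[OF x1(2)] by simp
    then show "Rm i * st x * st (Rm j) \<in> C.D" by (simp add: st_mult st_st mult.assoc)
  qed
qed

lemma Bp_closed: "closed Bp"
proof -
  have eq: "Bp = (\<lambda>x. pp * x * pp - x) -` {0} \<inter> (\<Inter>i\<in>{..<n}. \<Inter>j\<in>{..<n}. (\<lambda>x. Rm i * x * st (Rm j)) -` C.D)"
    unfolding Bp_def by auto
  show ?thesis unfolding eq
    by (intro closed_Int closed_INT ballI closed_vimage C.D_closed closed_singleton continuous_intros)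
qed

lemma D_vals: "Ep 0 \<in> C.D" "zz \<in> C.D" "0 \<in> C.D"
  using C.e_D C.z_D C.zero_D by auto

lemma S_Bp: "S \<subseteq> Bp"
proof
  fix x assume "x \<in> S"
  then consider (a) k where "k < n" "x = Ep k" | (b) k where "Suc k < n" "x = Ep k * u * Ep (Suc k)"
    | (c) "x = pp * u * pp"
    unfolding S_def
  proof (elim UnE imageE)
    fix i assume i: "i \<in> {1..n}" "x = ee i"
    then show thesis using ee_Ep[OF i(1)] that(1)[of "i - 1"] by auto
  next
    fix i assume i: "i \<in> {1..n-1}" "x = ee i * u * ee (i + 1)"
    have "ee i = Ep (i - 1)" "ee (i + 1) = Ep (Suc (i - 1))" using ee_Ep[of i] ee_Ep[of "i+1"] i n1 by auto
    then show thesis using i that(2)[of "i - 1"] by auto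
  qed (use that in auto)
  then show "x \<in> Bp"
  proof cases
    case (a k)
    show ?thesis unfolding Bp_def
    proof (intro CollectI conjI allI impI)
      show "pp * x * pp = x" using a by (simp add: pp_Ep Ep_pp mult.assoc)
      fix i j assume ij: "i < n" "j < n"
      have "Rm i * x * st (Rm j) = (if i = k then Rm k * st (Rm j) else 0)" using a ij by (simp add: Rm_Ep)
      then show "Rm i * x * st (Rm j) \<in> C.D" using a ij D_vals by (simp add: Rm_stRm)
    qed
  next
    case (b k)
    show ?thesis unfolding Bp_def
    proof (intro CollectI conjI allI impI)
      show "pp * x * pp = x" using b by (simp add: mult.assoc[symmetric] pp_Ep) (simp add: mult.assoc Ep_pp)
      fix i j assume ij: "i < n" "j < n"
      have "Rm i * x * st (Rm j) = (if i = k then Rm k * u * (Ep (Suc k) * st (Rm j)) else 0)"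
        using b ij by (simp add: mult.assoc[symmetric] Rm_Ep)
      also have "\<dots> = (if i = k \<and> j = Suc k then Rm (Suc k) * st (Rm j) else 0)"
        using b ij by (simp add: Ep_stRm Rm_u_lt)
      finally show "Rm i * x * st (Rm j) \<in> C.D" using b ij D_vals by (simp add: Rm_stRm)
    qed
  next
    case c
    show ?thesis unfolding Bp_def
    proof (intro CollectI conjI allI impI)
      show "pp * x * pp = x" using c by (simp add: mult.assoc pp_idem) (simp add: mult.assoc[symmetric] pp_idem)
      fix i j assume ij: "i < n" "j < n"
      have "Rm i * x * st (Rm j) = Rm i * u * st (Rm j)"
        using c ij by (simp add: mult.assoc[symmetric] Rm_pp) (simp add: mult.assoc pp_stRm)
      show "Rm i * x * st (Rm j) \<in> C.D"
      proof (cases "Suc i < n")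
        case True
        then show ?thesis using \<open>Rm i * x * st (Rm j) = Rm i * u * st (Rm j)\<close> ij D_vals
          by (simp add: Rm_u_lt Rm_stRm)
      next
        case False
        then have "Suc i = n" using ij by simp
        then show ?thesis using \<open>Rm i * x * st (Rm j) = Rm i * u * st (Rm j)\<close> ij D_vals
          by (simp add: Rm_u_n zz_stRm)
      qed
    qed
  qed
qed

end

context mainloc begin

lemma gen_eq: "cstar_generated sc st S = Bp"
  unfolding cstar_generated_def
proof (rule antisym)
  show "\<Inter>{B. S \<subseteq> B \<and> closed B \<and> star_subalgebra sc st B} \<subseteq> Bp"
    by (rule Inter_lower) (simp add: S_Bp Bp_closed Bp_sub)
  show "Bp \<subseteq> \<Inter>{B. S \<subseteq> B \<and> closed B \<and> star_subalgebra sc st B}"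
  proof (rule Inter_greatest)
    fix B assume "B \<in> {B. S \<subseteq> B \<and> closed B \<and> star_subalgebra sc st B}"
    then have SB: "S \<subseteq> B" and cB: "closed B" and sB: "star_subalgebra sc st B" by auto
    have sB': "\<And>x y. x \<in> B \<Longrightarrow> y \<in> B \<Longrightarrow> x * y \<in> B" "\<And>x. x \<in> B \<Longrightarrow> st x \<in> B"
      using sB unfolding star_subalgebra_def by auto
    have EB: "Ep k \<in> B" if "k < n" for k
    proof -
      have "ee (Suc k) \<in> S" unfolding S_def using that by auto
      moreover have "ee (Suc k) = Ep k" using ee_Ep[of "Suc k"] that by simp
      ultimately show ?thesis using SB by auto
    qed
    have gB: "Ep k * u * Ep (Suc k) \<in> B" if "Suc k < n" for k
    proof -
      have "ee (Suc k) * u * ee (Suc k + 1) \<in> S" unfolding S_def using that by auto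
      moreover have "ee (Suc k) = Ep k" "ee (Suc k + 1) = Ep (Suc k)"
        using ee_Ep[of "Suc k"] ee_Ep[of "Suc (Suc k)"] that by simp_all
      ultimately show ?thesis using SB by auto
    qed
    have pB: "pp * u * pp \<in> B" using SB unfolding S_def pp_sum by auto
    have RB: "j < n \<Longrightarrow> Rm j \<in> B" for j
    proof (induct j)
      case 0 then show ?case using EB[of 0] by (simp add: Rm_def)
    next
      case (Suc j)
      have "Rm j * (Ep j * u * Ep (Suc j)) = Rm (Suc j)"
        using Suc(2) by (simp add: mult.assoc[symmetric] Rm_Ep Rm_u_lt)
      moreover have "Rm j \<in> B" using Suc by simp
      moreover have "Ep j * u * Ep (Suc j) \<in> B" using gB Suc(2) by simp
      ultimately show ?case using sB'(1) by metis
    qed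
    have zB: "zz \<in> B"
    proof -
      have n0: "n - 1 < n" "Suc (n - 1) = n" using n1 by auto
      have "Rm (n - 1) * (Ep (n - 1) * (pp * u * pp) * Ep 0) = zz"
      proof -
        have "Rm (n - 1) * (Ep (n - 1) * (pp * u * pp) * Ep 0) = (Rm (n - 1) * Ep (n - 1)) * pp * u * (pp * Ep 0)"
          by (simp add: mult.assoc)
        also have "\<dots> = Rm (n - 1) * u * Ep 0" using n0 n1 by (simp add: Rm_Ep Rm_pp pp_Ep)
        also have "\<dots> = zz" using n0 C.ze by (simp add: Rm_u_n)
        finally show ?thesis .
      qed
      moreover have "Rm (n - 1) * (Ep (n - 1) * (pp * u * pp) * Ep 0) \<in> B"
        using n0 n1 by (intro sB' RB EB pB) auto
      ultimately show ?thesis by simp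
    qed
    have DB: "C.D \<subseteq> B" by (rule C.D_min[OF cB sB EB zB]) (use n1 in simp)
    show "Bp \<subseteq> B"
    proof
      fix x assume x: "x \<in> Bp"
      then have x1: "pp * x * pp = x" "\<And>i j. i < n \<Longrightarrow> j < n \<Longrightarrow> Rm i * x * st (Rm j) \<in> C.D"
        unfolding Bp_def by auto
      have t: "st (Rm i) * (Rm i * x * st (Rm j)) * Rm j \<in> B" if ij: "i < n" "j < n" for i j
        using sB'(1)[OF sB'(1)[OF sB'(2)[OF RB[OF ij(1)]] subsetD[OF DB x1(2)[OF ij]]] RB[OF ij(2)]] .
      have "(\<Sum>j<n. st (Rm i) * (Rm i * x * st (Rm j)) * Rm j) \<in> B" if "i < n" for i
        using t that by (rule_tac subalg_sum[OF sB]) auto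
      then have "(\<Sum>i<n. \<Sum>j<n. st (Rm i) * (Rm i * x * st (Rm j)) * Rm j) \<in> B"
        by (rule_tac subalg_sum[OF sB]) auto
      then show "x \<in> B" using decomp[OF x1(1)] by simp
    qed
  qed
qed

definition phi :: "'a \<Rightarrow> complex \<Rightarrow> nat \<Rightarrow> nat \<Rightarrow> complex" where
  "phi x = (\<lambda>l i j. if l \<in> C.X \<and> i < n \<and> j < n then C.chi l (Rm i * x * st (Rm j)) else 0)"

lemma Bp_D: "x \<in> Bp \<Longrightarrow> i < n \<Longrightarrow> j < n \<Longrightarrow> Rm i * x * st (Rm j) \<in> C.D"
  unfolding Bp_def by auto

lemma phi_in: "x \<in> Bp \<Longrightarrow> phi x \<in> CX_Mn C.X n"
  unfolding CX_Mn_def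
proof (intro CollectI conjI allI impI)
  fix i j assume x: "x \<in> Bp" and ij: "i < n" "j < n"
  have "continuous_on C.X (\<lambda>l. C.chi l (Rm i * x * st (Rm j)))" by (rule C.chi_cont[OF Bp_D[OF x ij]])
  then show "continuous_on C.X (\<lambda>l. phi x l i j)"
    by (rule continuous_on_cong[THEN iffD1, rotated 2]) (simp_all add: phi_def ij)
next
  fix l i j assume "l \<notin> C.X \<or> \<not> (i < n \<and> j < n)"
  then show "phi x l i j = 0" unfolding phi_def by auto
qed

lemma phi_add: "x \<in> Bp \<Longrightarrow> y \<in> Bp \<Longrightarrow> phi (x + y) = CX_Mn_add (phi x) (phi y)"
  unfolding CX_Mn_add_def
proof (intro ext)
  fix l i j assume x: "x \<in> Bp" and y: "y \<in> Bp"
  show "phi (x + y) l i j = phi x l i j + phi y l i j"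
  proof (cases "l \<in> C.X \<and> i < n \<and> j < n")
    case True
    then show ?thesis using C.D_add_chi[OF Bp_D[OF x] Bp_D[OF y]] unfolding phi_def
      by (simp add: distrib_left distrib_right)
  qed (auto simp: phi_def)
qed

lemma phi_mult: "x \<in> Bp \<Longrightarrow> y \<in> Bp \<Longrightarrow> phi (x * y) = CX_Mn_mult n (phi x) (phi y)"
  unfolding CX_Mn_mult_def
proof (intro ext)
  fix l i j assume x: "x \<in> Bp" and y: "y \<in> Bp"
  show "phi (x * y) l i j = (\<Sum>k<n. phi x l i k * phi y l k j)"
  proof (cases "l \<in> C.X \<and> i < n \<and> j < n")
    case True
    then have ij: "l \<in> C.X" "i < n" "j < n" by auto
    have s: "(\<Sum>k<n. (Rm i * x * st (Rm k)) * (Rm k * y * st (Rm j))) \<in> C.D \<and>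
      (\<forall>l\<in>C.X. C.chi l (\<Sum>k<n. (Rm i * x * st (Rm k)) * (Rm k * y * st (Rm j))) =
        (\<Sum>k<n. C.chi l ((Rm i * x * st (Rm k)) * (Rm k * y * st (Rm j)))))"
      using ij C.D_mult_chi[OF Bp_D[OF x] Bp_D[OF y]] by (intro D_sum) auto
    have "phi (x * y) l i j = C.chi l (\<Sum>k<n. (Rm i * x * st (Rm k)) * (Rm k * y * st (Rm j)))"
      unfolding phi_def using ij mult_split[OF x ij(2,3)] by simp
    also have "\<dots> = (\<Sum>k<n. C.chi l ((Rm i * x * st (Rm k)) * (Rm k * y * st (Rm j))))" using s ij by simp
    also have "\<dots> = (\<Sum>k<n. phi x l i k * phi y l k j)"
      using ij C.D_mult_chi[OF Bp_D[OF x] Bp_D[OF y]] unfolding phi_def by (intro sum.cong) auto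
    finally show ?thesis .
  next
    case False
    have "phi (x * y) l i j = 0" using False unfolding phi_def by auto
    moreover have "(\<Sum>k<n. phi x l i k * phi y l k j) = 0" using False unfolding phi_def by (intro sum.neutral) auto
    ultimately show ?thesis by simp
  qed
qed

lemma phi_sc: "x \<in> Bp \<Longrightarrow> phi (sc c x) = CX_Mn_scale c (phi x)"
  unfolding CX_Mn_scale_def
proof (intro ext)
  fix l i j assume x: "x \<in> Bp"
  show "phi (sc c x) l i j = c * phi x l i j"
  proof (cases "l \<in> C.X \<and> i < n \<and> j < n")
    case True
    then show ?thesis using C.D_sc_chi[OF Bp_D[OF x], of _ _ c] unfolding phi_def
      by (simp add: sc_mult_left sc_mult_right)
  qed (auto simp: phi_def)
qed

lemma phi_st: "x \<in> Bp \<Longrightarrow> phi (st x) = CX_Mn_star (phi x)"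
  unfolding CX_Mn_star_def
proof (intro ext)
  fix l i j assume x: "x \<in> Bp"
  show "phi (st x) l i j = cnj (phi x l j i)"
  proof (cases "l \<in> C.X \<and> i < n \<and> j < n")
    case True
    have "Rm i * st x * st (Rm j) = st (Rm j * x * st (Rm i))" by (simp add: st_mult st_st mult.assoc)
    then show ?thesis using True C.D_st_chi[OF Bp_D[OF x, of j i]] unfolding phi_def by auto
  qed (auto simp: phi_def)
qed

lemma phi_inj: "inj_on phi Bp"
proof (rule inj_onI)
  fix x y assume x: "x \<in> Bp" and y: "y \<in> Bp" and eq: "phi x = phi y"
  have c: "Rm i * x * st (Rm j) = Rm i * y * st (Rm j)" if ij: "i < n" "j < n" for i j
  proof -
    define d where "d = Rm i * x * st (Rm j) + sc (-1) (Rm i * y * st (Rm j))"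
    have dy: "sc (-1) (Rm i * y * st (Rm j)) \<in> C.D" using C.D_sc_chi[OF Bp_D[OF y ij]] by simp
    have "d \<in> C.D" unfolding d_def using C.D_add_chi[OF Bp_D[OF x ij] dy] by simp
    moreover have "C.chi l d = 0" if l: "l \<in> C.X" for l
    proof -
      have "phi x l i j = phi y l i j" using eq by simp
      then have "C.chi l (Rm i * x * st (Rm j)) = C.chi l (Rm i * y * st (Rm j))"
        unfolding phi_def using l ij by simp
      then show ?thesis unfolding d_def using C.D_add_chi[OF Bp_D[OF x ij] dy] C.D_sc_chi[OF Bp_D[OF y ij]] l
        by simp
    qed
    ultimately have "d = 0" by (rule C.chi_inj)
    then show ?thesis unfolding d_def by (simp add: sc_minus_left)
  qed
  have "x = (\<Sum>i<n. \<Sum>j<n. st (Rm i) * (Rm i * x * st (Rm j)) * Rm j)"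
    using x unfolding Bp_def by (intro decomp) simp
  also have "\<dots> = (\<Sum>i<n. \<Sum>j<n. st (Rm i) * (Rm i * y * st (Rm j)) * Rm j)"
    using c by (intro sum.cong refl) simp
  also have "\<dots> = y" using y unfolding Bp_def by (intro decomp[symmetric]) simp
  finally show "x = y" .
qed

lemma phi_surj: "CX_Mn C.X n \<subseteq> phi ` Bp"
proof
  fix F assume F: "F \<in> CX_Mn C.X n"
  then have Fc: "\<And>i j. i < n \<Longrightarrow> j < n \<Longrightarrow> continuous_on C.X (\<lambda>l. F l i j)"
    and F0: "\<And>l i j. l \<notin> C.X \<or> \<not> (i < n \<and> j < n) \<Longrightarrow> F l i j = 0"
    unfolding CX_Mn_def by blast+
  define dd where "dd ij = (SOME d. d \<in> C.D \<and> (\<forall>l\<in>C.X. C.chi l d = F l (fst ij) (snd ij)))" for ij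
  have dd: "dd (i, j) \<in> C.D \<and> (\<forall>l\<in>C.X. C.chi l (dd (i, j)) = F l i j)" if ij: "i < n" "j < n" for i j
  proof -
    from C.chi_surj[OF Fc[OF ij]] obtain d where "d \<in> C.D" "\<forall>l\<in>C.X. C.chi l d = F l i j" by blast
    then show ?thesis unfolding dd_def fst_conv snd_conv
      by (intro someI[of "\<lambda>d. d \<in> C.D \<and> (\<forall>l\<in>C.X. C.chi l d = F l i j)" d]) simp
  qed
  define x where "x = (\<Sum>i<n. \<Sum>j<n. st (Rm i) * dd (i, j) * Rm j)"
  have comp: "Rm k * x * st (Rm m) = dd (k, m)" if km: "k < n" "m < n" for k m
  proof -
    have "Rm k * x * st (Rm m) = (\<Sum>i<n. \<Sum>j<n. (Rm k * st (Rm i)) * dd (i, j) * (Rm j * st (Rm m)))"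
      unfolding x_def by (simp add: sum_distrib_left sum_distrib_right mult.assoc)
    also have "\<dots> = (\<Sum>i<n. \<Sum>j<n. if j = m then (if i = k then Ep 0 * dd (k, m) * Ep 0 else 0) else 0)"
      using km by (intro sum.cong refl) (auto simp: Rm_stRm)
    also have "\<dots> = (\<Sum>i<n. if i = k then Ep 0 * dd (k, m) * Ep 0 else 0)"
      using km by (simp add: sum.delta)
    also have "\<dots> = Ep 0 * dd (k, m) * Ep 0"
      using km by (simp add: sum.delta)
    also have "\<dots> = dd (k, m)" using C.D_corner dd[OF km] by simp
    finally show ?thesis .
  qed
  have xB: "x \<in> Bp" unfolding Bp_def
  proof (intro CollectI conjI allI impI)
    show "pp * x * pp = x" unfolding x_def
      by (simp add: sum_distrib_left sum_distrib_right mult.assoc[symmetric] pp_stRm)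
         (simp add: mult.assoc Rm_pp)
    fix i j assume "i < n" "j < n"
    then show "Rm i * x * st (Rm j) \<in> C.D" using comp dd by simp
  qed
  have "phi x = F"
  proof (intro ext)
    fix l i j show "phi x l i j = F l i j"
      using dd comp F0 unfolding phi_def by (cases "l \<in> C.X \<and> i < n \<and> j < n") auto
  qed
  then show "F \<in> phi ` Bp" by (intro image_eqI[OF _ xB]) simp
qed

lemma main_iso: "\<exists>X \<phi>. compact X \<and> X \<subseteq> sphere 0 1 \<and> star_iso_CX_Mn sc st (cstar_generated sc st S) X n \<phi>"
proof (intro exI conjI)
  show "compact C.X" by (rule C.X_compact)
  show "C.X \<subseteq> sphere 0 1" by (rule C.X_sub)
  show "star_iso_CX_Mn sc st (cstar_generated sc st S) C.X n phi"
    unfolding star_iso_CX_Mn_def gen_eq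
  proof (intro conjI ballI allI)
    show "bij_betw phi Bp (CX_Mn C.X n)"
      unfolding bij_betw_def using phi_inj phi_in phi_surj by blast
  qed (simp_all add: phi_add phi_mult phi_sc phi_st)
qed

end

theorem lemma2p13:
  fixes sc :: "complex \<Rightarrow> 'a::{banach, real_normed_algebra_1} \<Rightarrow> 'a"
    and st :: "'a \<Rightarrow> 'a"
    and e :: "nat \<Rightarrow> 'a" and u :: 'a and n :: nat
  assumes "unital_cstar_algebra sc st"
    and "n \<ge> 1"
    and "\<And>i. i \<in> {1..n} \<Longrightarrow> projection st (e i)"
    and "\<And>i j. i \<in> {1..n} \<Longrightarrow> j \<in> {1..n} \<Longrightarrow> i \<noteq> j \<Longrightarrow> e i * e j = 0"
    and "unitary st u"
    and "\<And>i. i \<in> {1..n} \<Longrightarrow> st u * e i * u = e (if i = n then 1 else i + 1)"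
  shows "let p = (\<Sum>i=1..n. e i) in
         \<exists>X \<phi>. compact X \<and> X \<subseteq> sphere 0 1 \<and>
           star_iso_CX_Mn sc st
             (cstar_generated sc st
                (e ` {1..n} \<union> (\<lambda>i. e i * u * e (i + 1)) ` {1..n-1} \<union> {p * u * p}))
             X n \<phi>"
  proof -
  interpret M: mainloc sc st e u n
    by (rule mainloc.intro[OF assms(1)], rule mainloc_axioms.intro) (use assms in auto)
  show ?thesis using M.main_iso unfolding M.S_def M.pp_sum Let_def by simp
qed

end
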